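(* Let $\Omega$ be a $\sigma$-compact metric space, $\nu$ a probability measure on the Borel $\sigma$-field of $\Omega$, and $\tau\mapsto\mathcal{D}_\tau\in\mathbb{R}^{m\times m\times p}$ a continuous map into TPSD T-product tensors with $\sup_{\tau}\|\mathcal{D}_\tau\|<\infty$ and $\int_\Omega\|\mathcal{D}_\tau^{-q}\|_1\,d\nu(\tau)<\infty$ for every $q>0$. Then $$\lim_{q\to 0^+}\frac{1}{q}\log\int_\Omega\frac{\|\mathcal{D}_\tau^{-q}\|_1}{mp}\,d\nu(\tau)=-\frac{1}{mp}\int_\Omega\log\det(\mathcal{D}_\tau)\,d\nu(\tau).$$
   Context: For a square $\mathcal{C}\in\mathbb{C}^{m\times m\times p}$, $\mathrm{bcirc}(\mathcal{C})=(F_p^H\otimes I_m)\mathrm{Diag}(C_1,\dots,C_p)(F_p\otimes I_m)$ with $F_p$ the normalized $p\times p$ DFT matrix and $\mathrm{bcirc}(\mathcal{C})$ the block-circulant matrix of the frontal slices; $C_1,\dots,C_p$ are the Fourier blocks (Hermitian if $\mathcal{C}$ is symmetric, i.e. $\mathcal{C}=\mathrm{bcirc}^{-1}(\mathrm{bcirc}(\mathcal{C})^T)$). The T-eigenvalues of a symmetric tensor are the $mp$ eigenvalues of $C_1,\dots,C_p$ (with multiplicity); TPSD (TPD) means all T-eigenvalues $\ge0$ ($>0$). $\det(\mathcal{C})$ is the product of all $mp$ T-eigenvalues. For TPD $\mathcal{D}$, $\mathcal{D}^{-q}$ is the tensor with Fourier blocks $D_i^{-q}$; $\|\mathcal{D}_\tau^{-q}\|_1:=+\infty$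 if $\mathcal{D}_\tau$ is not TPD. $\|\cdot\|_1$ is the trace norm (sum of all $mp$ T-singular values, i.e. singular values of the Fourier blocks) and $\|\cdot\|$ the operator norm (largest T-singular value). *)

theory Defs
  imports "HOL-Probability.Probability_Measure" "Jordan_Normal_Form.Char_Poly" "Jordan_Normal_Form.Schur_Decomposition"
begin

text \<open>A real third-order tensor in R^(m x m x p) is represented by its frontal slices
  D 0, ..., D (p-1), each a real m x m matrix.\<close>

definition tensor :: "nat \<Rightarrow> nat \<Rightarrow> (nat \<Rightarrow> real mat) \<Rightarrow> bool" where
  "tensor m p D \<longleftrightarrow> (\<forall>j<p. D j \<in> carrier_mat m m)"

text \<open>The block-circulant matrix of the frontal slices: block (r,s) is D ((r - s) mod p).\<close>
definition bcirc :: "nat \<Rightarrow> nat \<Rightarrow> (nat \<Rightarrow> real mat) \<Rightarrow> real mat" where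
  "bcirc m p D = Matrix.mat (m*p) (m*p)
     (\<lambda>(r,s). D ((r div m + p - s div m) mod p) $$ (r mod m, s mod m))"

text \<open>Symmetric tensor: C = bcirc^{-1}(bcirc(C)^T), i.e. bcirc(C) is symmetric.\<close>
definition tsym :: "nat \<Rightarrow> nat \<Rightarrow> (nat \<Rightarrow> real mat) \<Rightarrow> bool" where
  "tsym m p D \<longleftrightarrow> transpose_mat (bcirc m p D) = bcirc m p D"

text \<open>Fourier blocks C_k = sum_j omega^(jk) D_j, omega = exp(-2 pi i/p); these are the
  diagonal blocks of (F_p \<otimes> I_m) bcirc(D) (F_p^H \<otimes> I_m).\<close>
definition fblock :: "nat \<Rightarrow> nat \<Rightarrow> (nat \<Rightarrow> real mat) \<Rightarrow> nat \<Rightarrow> complex mat" where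
  "fblock m p D k = Matrix.mat m m
     (\<lambda>(a,b). \<Sum>j<p. cis (- 2 * pi * real j * real k / real p) * complex_of_real (D j $$ (a,b)))"

definition eig_mset :: "complex mat \<Rightarrow> complex multiset" where
  "eig_mset A = Abs_multiset (\<lambda>x. Polynomial.order x (char_poly A))"

definition sing_mset :: "complex mat \<Rightarrow> real multiset" where
  "sing_mset A = image_mset (\<lambda>x. sqrt (Re x)) (eig_mset (mat_adjoint A * A))"

definition teig :: "nat \<Rightarrow> nat \<Rightarrow> (nat \<Rightarrow> real mat) \<Rightarrow> complex multiset" where
  "teig m p D = (\<Sum>k<p. eig_mset (fblock m p D k))"

definition TPSD :: "nat \<Rightarrow> nat \<Rightarrow> (nat \<Rightarrow> real mat) \<Rightarrow> bool" where
  "TPSD m p D \<longleftrightarrow> tensor m p D \<and> tsym m p D \<and>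
     (\<forall>z\<in>#teig m p D. z \<in> \<real> \<and> 0 \<le> Re z)"

definition TPD :: "nat \<Rightarrow> nat \<Rightarrow> (nat \<Rightarrow> real mat) \<Rightarrow> bool" where
  "TPD m p D \<longleftrightarrow> tensor m p D \<and> tsym m p D \<and>
     (\<forall>z\<in>#teig m p D. z \<in> \<real> \<and> 0 < Re z)"

definition tdet :: "nat \<Rightarrow> nat \<Rightarrow> (nat \<Rightarrow> real mat) \<Rightarrow> complex" where
  "tdet m p D = prod_mset (teig m p D)"

definition tsing :: "nat \<Rightarrow> nat \<Rightarrow> (nat \<Rightarrow> real mat) \<Rightarrow> real multiset" where
  "tsing m p D = (\<Sum>k<p. sing_mset (fblock m p D k))"

definition tnorm_op :: "nat \<Rightarrow> nat \<Rightarrow> (nat \<Rightarrow> real mat) \<Rightarrow> real" where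
  "tnorm_op m p D = Max (set_mset (tsing m p D))"

definition unitary_mat :: "complex mat \<Rightarrow> bool" where
  "unitary_mat U \<longleftrightarrow> (\<exists>n. U \<in> carrier_mat n n \<and> mat_adjoint U * U = 1\<^sub>m n)"

definition mat_powr :: "complex mat \<Rightarrow> real \<Rightarrow> complex mat" where
  "mat_powr A r = (SOME B. \<exists>U d. U \<in> carrier_mat (dim_row A) (dim_row A) \<and> unitary_mat U \<and>
      (\<forall>i<dim_row A. 0 < d i) \<and>
      A = U * mat_diag (dim_row A) (\<lambda>i. complex_of_real (d i)) * mat_adjoint U \<and>
      B = U * mat_diag (dim_row A) (\<lambda>i. complex_of_real (d i powr r)) * mat_adjoint U)"

text \<open>Trace norm of the tensor D^{-q} (Fourier blocks D_i^{-q}): sum of all singular values of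
  its Fourier blocks; set to +infinity if D is not TPD.\<close>
definition tnorm1_negpow :: "nat \<Rightarrow> nat \<Rightarrow> (nat \<Rightarrow> real mat) \<Rightarrow> real \<Rightarrow> ennreal" where
  "tnorm1_negpow m p D q =
     (if TPD m p D then ennreal (\<Sum>k<p. sum_mset (sing_mset (mat_powr (fblock m p D k) (- q))))
      else \<infinity>)"

end

theory Submission
  imports Defs
begin


abbreviation adj :: "complex mat \<Rightarrow> complex mat" where "adj \<equiv> mat_adjoint"

lemma adj_dim[simp]: "dim_row (adj A) = dim_col A" "dim_col (adj A) = dim_row A"
  unfolding mat_adjoint_def by (auto simp: mat_of_rows_def)

lemma adj_index[simp]: "i < dim_col A \<Longrightarrow> j < dim_row A \<Longrightarrow> adj A $$ (i,j) = cnj (A $$ (j,i))"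
  unfolding mat_adjoint_def by (simp add: mat_of_rows_def)

lemma adj_carrier[simp]: "A \<in> carrier_mat r c \<Longrightarrow> adj A \<in> carrier_mat c r"
  unfolding carrier_mat_def by simp

lemma adj_adj[simp]: "adj (adj A) = A"
  by (rule eq_matI, auto)

lemma adj_mult: assumes "A \<in> carrier_mat r k" "B \<in> carrier_mat k c"
  shows "adj (A * B) = adj B * adj A"
  using assms by (intro eq_matI) (auto simp: scalar_prod_def mult.commute)

lemma adj_one[simp]: "adj (1\<^sub>m n) = 1\<^sub>m n"
  by (rule eq_matI, auto)

lemma adj_diag: "adj (mat_diag n (\<lambda>i. complex_of_real (d i))) = mat_diag n (\<lambda>i. complex_of_real (d i))"
  by (rule eq_matI, auto simp: mat_diag_def)

lemma mult_index_sum: assumes "A \<in> carrier_mat r k" "B \<in> carrier_mat k c" "i < r" "j < c"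
  shows "(A * B) $$ (i,j) = (\<Sum>l<k. A $$ (i,l) * B $$ (l,j))"
  using assms by (auto simp: scalar_prod_def intro!: sum.cong)

lemma udu_index: assumes U: "U \<in> carrier_mat r n" and i: "i < r" and j: "j < r"
  shows "(U * mat_diag n f * adj U) $$ (i,j) = (\<Sum>k<n. U $$ (i,k) * f k * cnj (U $$ (j,k)))"
proof -
  have "U * mat_diag n f = Matrix.mat r n (\<lambda> (i,j). U $$ (i,j) * f j)"
    by (rule mat_diag_mult_right[OF U])
  then show ?thesis using U i j
    by (subst mult_index_sum[of _ r n _ r]) auto
qed

lemma adjU_U_index: assumes U: "U \<in> carrier_mat r n" and i: "i < n" and j: "j < n"
  shows "(adj U * U) $$ (i,j) = (\<Sum>k<r. cnj (U $$ (k,i)) * U $$ (k,j))"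
  using assms by (subst mult_index_sum[of _ n r _ n]) auto

definition unitary :: "nat \<Rightarrow> complex mat \<Rightarrow> bool" where
  "unitary n U \<longleftrightarrow> U \<in> carrier_mat n n \<and> adj U * U = 1\<^sub>m n"

lemma unitary_right: assumes "unitary n U" shows "U * adj U = 1\<^sub>m n"
proof -
  have U: "U \<in> carrier_mat n n" and UU: "adj U * U = 1\<^sub>m n" using assms unfolding unitary_def by auto
  show ?thesis by (rule mat_mult_left_right_inverse[OF adj_carrier[OF U] U UU])
qed


lemma cscalar_real: fixes u :: "complex vec" assumes "u \<in> carrier_vec n" "u \<noteq> 0\<^sub>v n"
  shows "u \<bullet>c u = complex_of_real (Re (u \<bullet>c u))" "Re (u \<bullet>c u) > 0"
proof -
  have ge: "u \<bullet>c u \<ge> 0" by (rule conjugate_square_ge_0_vec)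
  have ne: "u \<bullet>c u \<noteq> 0" using assms by simp
  from ge show "u \<bullet>c u = complex_of_real (Re (u \<bullet>c u))"
    by (simp add: less_eq_complex_def complex_eq_iff)
  from ge ne show "Re (u \<bullet>c u) > 0"
    by (auto simp: less_eq_complex_def complex_eq_iff)
qed

lemma unitary_first_col:
  fixes v :: "complex vec"
  assumes v: "v \<in> carrier_vec n" and v1: "v \<bullet>c v = 1"
  shows "\<exists>W. unitary n W \<and> (\<forall>a<n. W $$ (a,0) = v $ a)"
proof -
  have v0: "v \<noteq> 0\<^sub>v n" using v1 v by auto
  have n0: "n > 0"
  proof (rule ccontr)
    assume "\<not> n > 0" then have "n = 0" by simp
    then have "v \<bullet>c v = 0" using v by (simp add: scalar_prod_def)
    with v1 show False by simp
  qed
  interpret cof_vec_space n "TYPE(complex)" .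
  define b where "b = basis_completion v"
  from basis_completion[OF v v0, folded b_def]
  have span_b: "span (set b) = carrier_vec n" and dist_b: "distinct b"
    and indep: "\<not> lin_dep (set b)" and bc: "set b \<subseteq> carrier_vec n" and hdb: "hd b = v"
    and len_b: "length b = n" by auto
  from hdb len_b n0 obtain vs where bv: "b = v # vs" by (cases b, auto)
  define us where "us = gram_schmidt n b"
  from gram_schmidt_result[OF bc dist_b indep us_def]
  have orth: "corthogonal us" and usc: "set us \<subseteq> carrier_vec n" and len: "length us = n"
    using len_b by auto
  have hd: "us ! 0 = v" unfolding us_def bv using gram_schmidt_hd[OF v, of vs] len n0
    by (metis bv hd_conv_nth len_b list.size(3) not_less0 us_def)
  have usi: "i < n \<Longrightarrow> us ! i \<in> carrier_vec n" for i using usc len by auto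
  have usi0: "i < n \<Longrightarrow> us ! i \<noteq> 0\<^sub>v n" for i
  proof
    assume i: "i < n" and z: "us ! i = 0\<^sub>v n"
    have "us ! i \<bullet>c us ! i = 0" using z by simp
    with corthogonalD[OF orth, of i i] i len show False by auto
  qed
  define c where "c i = 1 / sqrt (Re (us ! i \<bullet>c us ! i))" for i
  define W where "W = Matrix.mat n n (\<lambda>(a,i). complex_of_real (c i) * (us ! i) $ a)"
  have W: "W \<in> carrier_mat n n" unfolding W_def by auto
  have c0: "c 0 = 1" unfolding c_def hd v1 by simp
  have col0: "\<forall>a<n. W $$ (a,0) = v $ a" unfolding W_def using n0 c0 hd by auto
  have "adj W * W = 1\<^sub>m n"
  proof (rule eq_matI)
    fix i j assume i: "i < dim_row (1\<^sub>m n)" and j: "j < dim_col (1\<^sub>m n)"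
    then have i: "i < n" and j: "j < n" by auto
    have "(adj W * W) $$ (i,j) = (\<Sum>k<n. cnj (W $$ (k,i)) * W $$ (k,j))"
      by (rule adjU_U_index[OF W i j])
    also have "\<dots> = complex_of_real (c i * c j) * (\<Sum>k<n. (us ! j) $ k * cnj ((us ! i) $ k))"
      unfolding W_def using i j by (simp add: sum_distrib_left mult_ac)
    also have "(\<Sum>k<n. (us ! j) $ k * cnj ((us ! i) $ k)) = us ! j \<bullet>c us ! i"
      using usi[OF i] by (simp add: scalar_prod_def lessThan_atLeast0)
    finally have eq: "(adj W * W) $$ (i,j) = complex_of_real (c i * c j) * (us ! j \<bullet>c us ! i)" .
    show "(adj W * W) $$ (i,j) = 1\<^sub>m n $$ (i,j)"
    proof (cases "i = j")
      case True
      have r: "us ! i \<bullet>c us ! i = complex_of_real (Re (us ! i \<bullet>c us ! i))"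
        and p: "Re (us ! i \<bullet>c us ! i) > 0" using cscalar_real[OF usi[OF i] usi0[OF i]] by auto
      have "c i * c i * Re (us ! i \<bullet>c us ! i) = 1" unfolding c_def using p
        by (simp add: divide_simps)
      then have "complex_of_real (c i * c i) * (us ! i \<bullet>c us ! i) = 1"
        by (subst r) (metis of_real_1 of_real_mult)
      then show ?thesis using eq True i by simp
    next
      case False
      have "us ! j \<bullet>c us ! i = 0" using corthogonalD[OF orth, of j i] False i j len by auto
      then show ?thesis using eq False i j by simp
    qed
  next
    show "dim_row (adj W * W) = dim_row (1\<^sub>m n)" using W by simp
    show "dim_col (adj W * W) = dim_col (1\<^sub>m n)" using W by simp
  qed
  then show ?thesis using W col0 unfolding unitary_def by blast
qed


lemma exists_unit_eigenvector:
  fixes A :: "complex mat" assumes A: "A \<in> carrier_mat (Suc n) (Suc n)"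
  shows "\<exists>e v. v \<in> carrier_vec (Suc n) \<and> v \<bullet>c v = 1 \<and> A *\<^sub>v v = e \<cdot>\<^sub>v v"
proof -
  obtain as where cp: "char_poly A = (\<Prod>a\<leftarrow>as. [:- a, 1:])" and len: "length as = Suc n"
    using char_poly_factorized[OF A] by blast
  then obtain e rest where as: "as = e # rest" by (cases as) auto
  have "poly (char_poly A) e = 0" unfolding cp as by simp
  then have ev: "eigenvalue A e" using eigenvalue_root_char_poly[OF A] by simp
  define w where "w = find_eigenvector A e"
  from find_eigenvector[OF A ev] have "eigenvector A w e" unfolding w_def .
  then have w: "w \<in> carrier_vec (Suc n)" and w0: "w \<noteq> 0\<^sub>v (Suc n)" and Aw: "A *\<^sub>v w = e \<cdot>\<^sub>v w"
    unfolding eigenvector_def using A by auto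
  have r: "w \<bullet>c w = complex_of_real (Re (w \<bullet>c w))" and p: "Re (w \<bullet>c w) > 0"
    using cscalar_real[OF w w0] by auto
  define c where "c = 1 / sqrt (Re (w \<bullet>c w))"
  define v where "v = complex_of_real c \<cdot>\<^sub>v w"
  have v: "v \<in> carrier_vec (Suc n)" unfolding v_def using w by simp
  have "v \<bullet>c v = complex_of_real c * (cnj (complex_of_real c) * (w \<bullet>c w))"
    unfolding v_def using w by (simp add: conjugate_smult_vec)
  also have "\<dots> = complex_of_real (c * c * Re (w \<bullet>c w))" by (subst r) simp
  also have "c * c * Re (w \<bullet>c w) = 1" unfolding c_def using p by (simp add: divide_simps)
  finally have v1: "v \<bullet>c v = 1" by simp
  have "A *\<^sub>v v = e \<cdot>\<^sub>v v" unfolding v_def using A w Aw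
    by (simp add: mult_mat_vec smult_smult_assoc mult.commute)
  with v v1 show ?thesis by blast
qed


lemma unitary_mult: assumes "unitary n U" "unitary n V" shows "unitary n (U * V)"
proof -
  have U: "U \<in> carrier_mat n n" and UU: "adj U * U = 1\<^sub>m n"
    and V: "V \<in> carrier_mat n n" and VV: "adj V * V = 1\<^sub>m n" using assms unfolding unitary_def by auto
  have "adj (U * V) * (U * V) = adj V * (adj U * U) * V"
    using U V by (simp add: adj_mult[OF U V] assoc_mult_mat[of _ n n _ n _ n] mult_carrier_mat[of _ n n _ n])
  also have "\<dots> = 1\<^sub>m n" using UU V VV by simp
  finally show ?thesis using U V unfolding unitary_def by auto
qed

lemma hermitian_spectral:
  fixes A :: "complex mat"
  assumes "A \<in> carrier_mat n n" "adj A = A"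
  shows "\<exists>U d. unitary n U \<and> A = U * mat_diag n (\<lambda>i. complex_of_real (d i)) * adj U"
  using assms
proof (induction n arbitrary: A)
  case 0
  have "A = 1\<^sub>m 0 * mat_diag 0 (\<lambda>i. complex_of_real 0) * adj (1\<^sub>m 0)"
    using 0 by (intro eq_matI) auto
  moreover have "unitary 0 (1\<^sub>m 0)" unfolding unitary_def by simp
  ultimately show ?case by (intro exI[of _ "1\<^sub>m 0"] exI[of _ "\<lambda>_. 0"]) simp
next
  case (Suc n)
  have A: "A \<in> carrier_mat (Suc n) (Suc n)" and herm: "adj A = A" using Suc.prems by auto
  obtain e v where v: "v \<in> carrier_vec (Suc n)" and v1: "v \<bullet>c v = 1" and Av: "A *\<^sub>v v = e \<cdot>\<^sub>v v"
    using exists_unit_eigenvector[OF A] by blast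
  obtain W where uW: "unitary (Suc n) W" and Wcol: "\<forall>a<Suc n. W $$ (a,0) = v $ a"
    using unitary_first_col[OF v v1] by blast
  have W: "W \<in> carrier_mat (Suc n) (Suc n)" and WW: "adj W * W = 1\<^sub>m (Suc n)"
    using uW unfolding unitary_def by auto
  have WW': "W * adj W = 1\<^sub>m (Suc n)" by (rule unitary_right[OF uW])
  define A' where "A' = adj W * (A * W)"
  have A': "A' \<in> carrier_mat (Suc n) (Suc n)" unfolding A'_def using A W by (meson adj_carrier mult_carrier_mat)
  have hA': "adj A' = A'"
    unfolding A'_def using A W herm
    by (simp add: adj_mult[of _ "Suc n" "Suc n" _ "Suc n"] assoc_mult_mat[of _ "Suc n" "Suc n" _ "Suc n" _ "Suc n"])
  have AW0: "(A * W) $$ (k,0) = e * W $$ (k,0)" if k: "k < Suc n" for k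
  proof -
    have "(A * W) $$ (k,0) = row A k \<bullet> col W 0" using A W k by simp
    also have "col W 0 = v" using Wcol W v by (intro eq_vecI) auto
    also have "row A k \<bullet> v = (A *\<^sub>v v) $ k" using A k by simp
    also have "\<dots> = e * v $ k" using Av v k by simp
    finally show ?thesis using Wcol k by simp
  qed
  have col0: "A' $$ (i,0) = (if i = 0 then e else 0)" if i: "i < Suc n" for i
  proof -
    have "A' $$ (i,0) = (\<Sum>k<Suc n. adj W $$ (i,k) * (A * W) $$ (k,0))"
      unfolding A'_def using A W i by (intro mult_index_sum[of _ "Suc n" "Suc n"]) auto
    also have "\<dots> = e * (\<Sum>k<Suc n. adj W $$ (i,k) * W $$ (k,0))"
      by (simp add: AW0 sum_distrib_left mult_ac del: sum.lessThan_Suc)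
    also have "(\<Sum>k<Suc n. adj W $$ (i,k) * W $$ (k,0)) = (adj W * W) $$ (i,0)"
      using W i by (intro mult_index_sum[symmetric, of _ "Suc n" "Suc n"]) auto
    finally show ?thesis using WW i by simp
  qed
  have row0: "A' $$ (0,j) = (if j = 0 then cnj e else 0)" if j: "j < Suc n" for j
  proof -
    have "A' $$ (0,j) = adj A' $$ (0,j)" using hA' by simp
    also have "\<dots> = cnj (A' $$ (j,0))" using A' j by simp
    finally show ?thesis using col0[OF j] by simp
  qed
  have ereal: "cnj e = e" using row0[of 0] col0[of 0] by simp
  define A3 where "A3 = Matrix.mat n n (\<lambda>(i,j). A' $$ (Suc i, Suc j))"
  have A3: "A3 \<in> carrier_mat n n" unfolding A3_def by simp
  have hA3: "adj A3 = A3"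
  proof (rule eq_matI)
    fix i j assume "i < dim_row A3" "j < dim_col A3"
    then have i: "i < n" and j: "j < n" using A3 by auto
    have "adj A3 $$ (i,j) = cnj (A' $$ (Suc j, Suc i))" unfolding A3_def using i j by simp
    also have "\<dots> = adj A' $$ (Suc i, Suc j)" using A' i j by simp
    also have "\<dots> = A3 $$ (i,j)" using hA' unfolding A3_def using i j by simp
    finally show "adj A3 $$ (i,j) = A3 $$ (i,j)" .
  qed (use A3 in auto)
  obtain U3 d3 where uU3: "unitary n U3" and A3eq: "A3 = U3 * mat_diag n (\<lambda>i. complex_of_real (d3 i)) * adj U3"
    using Suc.IH[OF A3 hA3] by blast
  have U3: "U3 \<in> carrier_mat n n" and UU3: "adj U3 * U3 = 1\<^sub>m n" using uU3 unfolding unitary_def by auto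
  define V where "V = Matrix.mat (Suc n) (Suc n) (\<lambda>(i,j). if i = 0 \<and> j = 0 then 1 else if i = 0 \<or> j = 0 then 0 else U3 $$ (i - 1, j - 1))"
  define d where "d i = (if i = 0 then Re e else d3 (i - 1))" for i
  have V: "V \<in> carrier_mat (Suc n) (Suc n)" unfolding V_def by simp
  have uV: "unitary (Suc n) V"
  proof -
    have "adj V * V = 1\<^sub>m (Suc n)"
    proof (rule eq_matI)
      fix i j assume "i < dim_row (1\<^sub>m (Suc n))" "j < dim_col (1\<^sub>m (Suc n))"
      then have i: "i < Suc n" and j: "j < Suc n" by auto
      have "(adj V * V) $$ (i,j) = (\<Sum>k<Suc n. cnj (V $$ (k,i)) * V $$ (k,j))"
        by (rule adjU_U_index[OF V i j])
      also have "\<dots> = cnj (V $$ (0,i)) * V $$ (0,j) + (\<Sum>k<n. cnj (V $$ (Suc k,i)) * V $$ (Suc k,j))"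
        by (rule sum.lessThan_Suc_shift)
      also have "\<dots> = 1\<^sub>m (Suc n) $$ (i,j)"
      proof (cases "i = 0 \<or> j = 0")
        case True
        then show ?thesis unfolding V_def using i j by auto
      next
        case False
        then obtain i' j' where ii: "i = Suc i'" and jj: "j = Suc j'" by (metis not0_implies_Suc)
        have i': "i' < n" and j': "j' < n" using i j ii jj by auto
        have "(\<Sum>k<n. cnj (V $$ (Suc k,i)) * V $$ (Suc k,j)) = (\<Sum>k<n. cnj (U3 $$ (k,i')) * U3 $$ (k,j'))"
          unfolding V_def ii jj using i' j' by (intro sum.cong) auto
        also have "\<dots> = (adj U3 * U3) $$ (i',j')" by (rule adjU_U_index[OF U3 i' j', symmetric])
        finally show ?thesis using UU3 i' j' ii jj unfolding V_def by simp
      qed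
      finally show "(adj V * V) $$ (i,j) = 1\<^sub>m (Suc n) $$ (i,j)" .
    qed (use V in auto)
    then show ?thesis using V unfolding unitary_def by auto
  qed
  have A'eq: "A' = V * mat_diag (Suc n) (\<lambda>i. complex_of_real (d i)) * adj V"
  proof (rule eq_matI)
    fix i j assume "i < dim_row (V * mat_diag (Suc n) (\<lambda>i. complex_of_real (d i)) * adj V)"
      "j < dim_col (V * mat_diag (Suc n) (\<lambda>i. complex_of_real (d i)) * adj V)"
    then have i: "i < Suc n" and j: "j < Suc n" using V by auto
    have "(V * mat_diag (Suc n) (\<lambda>i. complex_of_real (d i)) * adj V) $$ (i,j)
        = (\<Sum>k<Suc n. V $$ (i,k) * complex_of_real (d k) * cnj (V $$ (j,k)))"
      by (rule udu_index[OF V i j])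
    also have "\<dots> = V $$ (i,0) * complex_of_real (d 0) * cnj (V $$ (j,0))
        + (\<Sum>k<n. V $$ (i,Suc k) * complex_of_real (d (Suc k)) * cnj (V $$ (j,Suc k)))"
      by (rule sum.lessThan_Suc_shift)
    also have "\<dots> = A' $$ (i,j)"
    proof (cases "i = 0 \<or> j = 0")
      case True
      have "e = complex_of_real (Re e)" using ereal by (simp add: complex_eq_iff)
      then show ?thesis using True col0 row0 i j ereal unfolding V_def d_def by auto
    next
      case False
      then obtain i' j' where ii: "i = Suc i'" and jj: "j = Suc j'" by (metis not0_implies_Suc)
      have i': "i' < n" and j': "j' < n" using i j ii jj by auto
      have "(\<Sum>k<n. V $$ (i,Suc k) * complex_of_real (d (Suc k)) * cnj (V $$ (j,Suc k)))
          = (\<Sum>k<n. U3 $$ (i',k) * complex_of_real (d3 k) * cnj (U3 $$ (j',k)))"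
        unfolding V_def d_def ii jj using i' j' by (intro sum.cong) auto
      also have "\<dots> = A3 $$ (i',j')" unfolding A3eq by (rule udu_index[OF U3 i' j', symmetric])
      also have "\<dots> = A' $$ (i,j)" unfolding A3_def ii jj using i' j' by simp
      finally show ?thesis unfolding V_def ii jj using i' j' by simp
    qed
    finally show "A' $$ (i,j) = (V * mat_diag (Suc n) (\<lambda>i. complex_of_real (d i)) * adj V) $$ (i,j)" by simp
  qed (use A' V in auto)
  define U where "U = W * V"
  have uU: "unitary (Suc n) U" unfolding U_def by (rule unitary_mult[OF uW uV])
  define Dg where "Dg = mat_diag (Suc n) (\<lambda>i. complex_of_real (d i))"
  have Dg: "Dg \<in> carrier_mat (Suc n) (Suc n)" unfolding Dg_def by simp
  have "A = (W * adj W) * A * (W * adj W)" using WW' A by simp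
  also have "\<dots> = W * A' * adj W" unfolding A'_def using W A
    by (simp add: assoc_mult_mat[of _ "Suc n" "Suc n" _ "Suc n" _ "Suc n"] mult_carrier_mat[of _ "Suc n" "Suc n" _ "Suc n"])
  also have "\<dots> = W * (V * Dg * adj V) * adj W" unfolding A'eq Dg_def ..
  also have "\<dots> = U * Dg * adj U" unfolding U_def using W V Dg
    by (simp add: adj_mult[OF W V] assoc_mult_mat[of _ "Suc n" "Suc n" _ "Suc n" _ "Suc n"] mult_carrier_mat[of _ "Suc n" "Suc n" _ "Suc n"])
  finally show ?case using uU unfolding Dg_def by blast
qed


lemma order_prod_linear: "Polynomial.order x (\<Prod>a\<leftarrow>xs. [:- a, 1:]) = count (mset xs) (x :: 'a :: idom)"
proof (induction xs)
  case Nil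
  then show ?case by (simp add: order_0I)
next
  case (Cons a xs)
  have nz1: "(\<Prod>a\<leftarrow>xs. [:- a, 1:]) \<noteq> 0"
    by (auto simp: prod_list_zero_iff)
  have nz: "[:- a, 1:] * (\<Prod>a\<leftarrow>xs. [:- a, 1:]) \<noteq> 0"
    using nz1 by (metis mult_eq_0_iff pCons_eq_0_iff one_neq_zero)
  have "(\<Prod>a\<leftarrow>a#xs. [:- a, 1:]) = [:- a, 1:] * (\<Prod>a\<leftarrow>xs. [:- a, 1:])" by simp
  then have "Polynomial.order x (\<Prod>a\<leftarrow>a#xs. [:- a, 1:]) = Polynomial.order x [:- a, 1:] + Polynomial.order x (\<Prod>a\<leftarrow>xs. [:- a, 1:])"
    by (simp only: order_mult[OF nz])
  then show ?case using Cons by (simp add: order_linear')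
qed

lemma eig_udu:
  assumes uU: "unitary n U"
  shows "eig_mset (U * mat_diag n g * adj U) = image_mset g (mset [0..<n])"
proof -
  have U: "U \<in> carrier_mat n n" and UU: "adj U * U = 1\<^sub>m n" using uU unfolding unitary_def by auto
  have UU': "U * adj U = 1\<^sub>m n" by (rule unitary_right[OF uU])
  define D where "D = mat_diag n g"
  have D: "D \<in> carrier_mat n n" unfolding D_def by simp
  have B: "U * D * adj U \<in> carrier_mat n n" using U D by (meson adj_carrier mult_carrier_mat)
  have "similar_mat (U * D * adj U) D"
    by (rule similar_matI[of _ _ U "adj U" n]) (use U D B UU UU' in auto)
  then have "char_poly (U * D * adj U) = char_poly D" by (rule char_poly_similar)
  also have "\<dots> = (\<Prod>a\<leftarrow>diag_mat D. [:- a, 1:])"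
    by (rule char_poly_upper_triangular[OF D]) (auto simp: D_def upper_triangular_def mat_diag_def)
  also have "diag_mat D = map g [0..<n]" unfolding D_def diag_mat_def mat_diag_def
    by (intro nth_equalityI) auto
  finally have cp: "char_poly (U * D * adj U) = (\<Prod>a\<leftarrow>map g [0..<n]. [:- a, 1:])" .
  have "eig_mset (U * D * adj U) = Abs_multiset (count (mset (map g [0..<n])))"
    unfolding eig_mset_def cp order_prod_linear by simp
  also have "\<dots> = mset (map g [0..<n])" by (simp add: count_inverse)
  finally show ?thesis unfolding D_def by simp
qed

lemma adj_udu: assumes "unitary n U"
  shows "adj (U * mat_diag n (\<lambda>i. complex_of_real (d i)) * adj U) = U * mat_diag n (\<lambda>i. complex_of_real (d i)) * adj U"
proof -
  have U: "U \<in> carrier_mat n n" using assms unfolding unitary_def by auto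
  have D: "mat_diag n (\<lambda>i. complex_of_real (d i)) \<in> carrier_mat n n" by simp
  show ?thesis using U D
    by (simp add: adj_mult[of _ n n _ n] adj_diag mult_carrier_mat[of _ n n _ n] assoc_mult_mat[of _ n n _ n _ n])
qed

lemma udu_mult: assumes "unitary n U"
  shows "(U * mat_diag n f * adj U) * (U * mat_diag n g * adj U) = U * mat_diag n (\<lambda>i. f i * g i) * adj U"
proof -
  have U: "U \<in> carrier_mat n n" and UU: "adj U * U = 1\<^sub>m n" using assms unfolding unitary_def by auto
  have F: "mat_diag n f \<in> carrier_mat n n" and G: "mat_diag n g \<in> carrier_mat n n" by auto
  have "(U * mat_diag n f * adj U) * (U * mat_diag n g * adj U) = U * mat_diag n f * (adj U * U) * mat_diag n g * adj U"
    using U F G by (simp add: mult_carrier_mat[of _ n n _ n] assoc_mult_mat[of _ n n _ n _ n])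
  also have "\<dots> = U * (mat_diag n f * mat_diag n g) * adj U" using U F G UU
    by (simp add: mult_carrier_mat[of _ n n _ n] assoc_mult_mat[of _ n n _ n _ n] left_mult_one_mat[of _ n n])
  finally show ?thesis by simp
qed

lemma sing_udu: assumes uU: "unitary n U"
  shows "sing_mset (U * mat_diag n (\<lambda>i. complex_of_real (d i)) * adj U) = image_mset (\<lambda>i. \<bar>d i\<bar>) (mset [0..<n])"
proof -
  have "adj (U * mat_diag n (\<lambda>i. complex_of_real (d i)) * adj U) * (U * mat_diag n (\<lambda>i. complex_of_real (d i)) * adj U)
     = U * mat_diag n (\<lambda>i. complex_of_real (d i) * complex_of_real (d i)) * adj U"
    unfolding adj_udu[OF uU] by (rule udu_mult[OF uU])
  then show ?thesis unfolding sing_mset_def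
    by (simp add: eig_udu[OF uU] multiset.map_comp o_def real_sqrt_mult_self del: of_real_mult)
qed

lemma udu_pow: assumes uU: "unitary n U"
  shows "(U * mat_diag n g * adj U) ^\<^sub>m j = U * mat_diag n (\<lambda>i. g i ^ j) * adj U"
proof (induction j)
  case 0
  have U: "U \<in> carrier_mat n n" using assms unfolding unitary_def by auto
  have "U * mat_diag n (\<lambda>i. g i ^ 0) * adj U = U * adj U" using U by simp
  also have "\<dots> = 1\<^sub>m n" by (rule unitary_right[OF uU])
  finally show ?case using U by simp
next
  case (Suc j)
  then show ?case by (simp add: udu_mult[OF uU] mult.commute)
qed

lemma trace_udu: assumes uU: "unitary n U"
  shows "(\<Sum>i<n. (U * mat_diag n h * adj U) $$ (i,i)) = (\<Sum>k<n. h k)"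
proof -
  have U: "U \<in> carrier_mat n n" and UU: "adj U * U = 1\<^sub>m n" using uU unfolding unitary_def by auto
  have "(\<Sum>i<n. (U * mat_diag n h * adj U) $$ (i,i)) = (\<Sum>i<n. \<Sum>k<n. U $$ (i,k) * h k * cnj (U $$ (i,k)))"
    by (intro sum.cong refl udu_index[OF U]) auto
  also have "\<dots> = (\<Sum>k<n. h k * (\<Sum>i<n. cnj (U $$ (i,k)) * U $$ (i,k)))"
    by (subst sum.swap) (simp add: sum_distrib_left mult_ac)
  also have "\<dots> = (\<Sum>k<n. h k * (adj U * U) $$ (k,k))"
    by (intro sum.cong refl) (simp add: adjU_U_index[OF U])
  also have "\<dots> = (\<Sum>k<n. h k)" using UU by simp
  finally show ?thesis .
qed


definition evals :: "complex mat \<Rightarrow> real multiset" where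
  "evals A = image_mset Re (eig_mset A)"

lemma sum_mset_upt: "sum_mset (image_mset f (mset [0..<n])) = (\<Sum>i<n. f i)"
  by (induction n) (auto simp: add.commute)

lemma sum_mset_upt': "sum_mset (image_mset f (mset_set {0..<(n::nat)})) = (\<Sum>i<n. f i)"
  using sum_mset_upt[where f=f and n=n] by (simp add: mset_upt)

lemma mat_powr_sing:
  assumes A: "A \<in> carrier_mat n n" and uU: "unitary n U" and Aeq: "A = U * mat_diag n (\<lambda>i. complex_of_real (d i)) * adj U"
    and pos: "\<forall>i<n. 0 < d i"
  shows "sum_mset (sing_mset (mat_powr A r)) = (\<Sum>i<n. d i powr r)"
proof -
  have dr: "dim_row A = n" using A by simp
  let ?P = "\<lambda>B. \<exists>U d. U \<in> carrier_mat (dim_row A) (dim_row A) \<and> unitary_mat U \<and>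
      (\<forall>i<dim_row A. 0 < d i) \<and>
      A = U * mat_diag (dim_row A) (\<lambda>i. complex_of_real (d i)) * mat_adjoint U \<and>
      B = U * mat_diag (dim_row A) (\<lambda>i. complex_of_real (d i powr r)) * mat_adjoint U"
  have "?P (U * mat_diag n (\<lambda>i. complex_of_real (d i powr r)) * adj U)"
    unfolding dr
  proof (intro exI[of _ U] exI[of _ d] conjI)
    show "U \<in> carrier_mat n n" using uU unfolding unitary_def by auto
    show "unitary_mat U" using uU unfolding unitary_def unitary_mat_def by auto
  qed (use pos Aeq in auto)
  then have ex: "\<exists>B. ?P B" by (rule exI)
  have "?P (mat_powr A r)" unfolding mat_powr_def by (rule someI_ex[OF ex])
  then obtain U' d' where P': "U' \<in> carrier_mat (dim_row A) (dim_row A) \<and> unitary_mat U' \<and>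
      (\<forall>i<dim_row A. 0 < d' i) \<and>
      A = U' * mat_diag (dim_row A) (\<lambda>i. complex_of_real (d' i)) * mat_adjoint U' \<and>
      mat_powr A r = U' * mat_diag (dim_row A) (\<lambda>i. complex_of_real (d' i powr r)) * mat_adjoint U'"
    by blast
  have U': "U' \<in> carrier_mat n n" and uU': "unitary_mat U'"
    and Aeq': "A = U' * mat_diag n (\<lambda>i. complex_of_real (d' i)) * adj U'"
    and Beq: "mat_powr A r = U' * mat_diag n (\<lambda>i. complex_of_real (d' i powr r)) * adj U'"
    using P' unfolding dr by auto
  from uU' obtain m where "U' \<in> carrier_mat m m" "adj U' * U' = 1\<^sub>m m" unfolding unitary_mat_def by blast
  with U' have uU'': "unitary n U'" unfolding unitary_def by auto
  have e1: "eig_mset A = image_mset (\<lambda>i. complex_of_real (d i)) (mset [0..<n])"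
    using eig_udu[OF uU] Aeq by simp
  have e2: "eig_mset A = image_mset (\<lambda>i. complex_of_real (d' i)) (mset [0..<n])"
    using eig_udu[OF uU''] Aeq' by simp
  have "sum_mset (image_mset (\<lambda>x. Re x powr r) (image_mset (\<lambda>i. complex_of_real (d i)) (mset [0..<n])))
     = sum_mset (image_mset (\<lambda>x. Re x powr r) (image_mset (\<lambda>i. complex_of_real (d' i)) (mset [0..<n])))"
    using e1 e2 by simp
  then have eq: "(\<Sum>i<n. d i powr r) = (\<Sum>i<n. d' i powr r)"
    by (simp only: multiset.map_comp o_def Re_complex_of_real sum_mset_upt)
  have "sum_mset (sing_mset (mat_powr A r)) = (\<Sum>i<n. \<bar>d' i powr r\<bar>)"
    unfolding Beq sing_udu[OF uU''] sum_mset_upt ..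
  also have "\<dots> = (\<Sum>i<n. d' i powr r)" by simp
  finally show ?thesis using eq by simp
qed

lemma herm_summary:
  assumes A: "A \<in> carrier_mat n n" and h: "adj A = A"
  shows "eig_mset A = image_mset complex_of_real (evals A)"
    and "size (evals A) = n"
    and "sing_mset A = image_mset abs (evals A)"
    and "Re (\<Sum>i<n. (A ^\<^sub>m j) $$ (i,i)) = sum_mset (image_mset (\<lambda>x. x ^ j) (evals A))"
    and "(\<forall>x\<in>#evals A. x > 0) \<Longrightarrow> sum_mset (sing_mset (mat_powr A r)) = sum_mset (image_mset (\<lambda>x. x powr r) (evals A))"
proof -
  obtain U d where uU: "unitary n U" and Aeq: "A = U * mat_diag n (\<lambda>i. complex_of_real (d i)) * adj U"
    using hermitian_spectral[OF A h] by blast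
  have eig: "eig_mset A = image_mset (\<lambda>i. complex_of_real (d i)) (mset [0..<n])"
    using eig_udu[OF uU] Aeq by simp
  have ev: "evals A = image_mset d (mset [0..<n])"
    unfolding evals_def eig by (simp add: multiset.map_comp o_def)
  show "eig_mset A = image_mset complex_of_real (evals A)"
    unfolding eig ev by (simp add: multiset.map_comp o_def)
  show "size (evals A) = n" unfolding ev by simp
  have "sing_mset A = image_mset (\<lambda>i. \<bar>d i\<bar>) (mset [0..<n])" using sing_udu[OF uU] Aeq by simp
  then show "sing_mset A = image_mset abs (evals A)"
    unfolding ev by (simp add: multiset.map_comp o_def)
  have "(\<Sum>i<n. (A ^\<^sub>m j) $$ (i,i)) = (\<Sum>k<n. complex_of_real (d k) ^ j)"
    unfolding Aeq udu_pow[OF uU] by (rule trace_udu[OF uU])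
  then show "Re (\<Sum>i<n. (A ^\<^sub>m j) $$ (i,i)) = sum_mset (image_mset (\<lambda>x. x ^ j) (evals A))"
    unfolding ev by (simp add: multiset.map_comp o_def sum_mset_upt' flip: of_real_power)
  assume pos: "\<forall>x\<in>#evals A. x > 0"
  then have "\<forall>i<n. 0 < d i" unfolding ev by auto
  note mp = mat_powr_sing[OF A uU Aeq this]
  show "sum_mset (sing_mset (mat_powr A r)) = sum_mset (image_mset (\<lambda>x. x powr r) (evals A))"
    unfolding mp ev by (simp add: multiset.map_comp o_def sum_mset_upt')
qed


lemma image_mset_sumk: "image_mset f (\<Sum>k<(p::nat). F k) = (\<Sum>k<p. image_mset f (F k))"
  by (induction p) auto

lemma sum_mset_sumk: "sum_mset (\<Sum>k<(p::nat). F k) = (\<Sum>k<p. sum_mset (F k))"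
  by (induction p) auto

lemma prod_mset_sumk: "prod_mset (\<Sum>k<(p::nat). F k) = (\<Prod>k<p. prod_mset (F k))"
  by (induction p) (auto simp: mult.commute)

lemma in_sumk: "x \<in># (\<Sum>k<(p::nat). F k) \<longleftrightarrow> (\<exists>k<p. x \<in># F k)"
  by (induction p) (auto simp: less_Suc_eq)

lemma fblock_carrier[simp]: "fblock m p D k \<in> carrier_mat m m"
  unfolding fblock_def by simp

lemma tsym_entry:
  assumes ts: "tsym m p D" and j: "j < p" and a: "a < m" and b: "b < m"
  shows "D j $$ (b,a) = D ((p - j) mod p) $$ (a,b)"
proof -
  have p0: "p > 0" using j by simp
  have r1: "j * m + b < (j + 1) * m" using b by simp
  have r2: "(j + 1) * m \<le> p * m" using j by (intro mult_le_mono1) simp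
  have r: "j * m + b < m * p" using r1 r2 by (simp add: mult.commute)
  have s1: "m * 1 \<le> m * p" using p0 by (intro mult_le_mono2) simp
  have s: "a < m * p" using a s1 by linarith
  have dj: "(j * m + b) div m = j" "(j * m + b) mod m = b" using b by auto
  have da: "a div m = 0" "a mod m = a" using a by auto
  have "bcirc m p D $$ (j * m + b, a) = transpose_mat (bcirc m p D) $$ (j * m + b, a)" using ts unfolding tsym_def by simp
  also have "\<dots> = bcirc m p D $$ (a, j * m + b)" using r s unfolding bcirc_def by simp
  finally have "D ((j + p - 0) mod p) $$ (b, a) = D ((0 + p - j) mod p) $$ (a, b)"
    using r s j b unfolding bcirc_def by (simp add: dj da)
  then show ?thesis using j by simp
qed

lemma cis_shift: assumes "j < p"
  shows "cis (- 2 * pi * real ((p - j) mod p) * real k / real p) = cis (2 * pi * real j * real k / real p)"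
proof (cases "j = 0")
  case True then show ?thesis by simp
next
  case False
  have pj: "(p - j) mod p = p - j" using assms False by simp
  have eq: "- 2 * pi * real (p - j) * real k / real p = (- 2 * pi * real k) + 2 * pi * real j * real k / real p"
    using assms by (simp add: of_nat_diff field_simps)
  have "cis (- 2 * pi * real (p - j) * real k / real p) = cis (- 2 * pi * real k) * cis (2 * pi * real j * real k / real p)"
    by (subst eq) (rule cis_mult[symmetric])
  also have "cis (- 2 * pi * real k) = 1" using cis_multiple_2pi[of "- real k"] by simp
  finally show ?thesis using pj by simp
qed

lemma fblock_hermitian:
  assumes ts: "tsym m p D"
  shows "adj (fblock m p D k) = fblock m p D k"
proof (rule eq_matI)
  fix a b assume "a < dim_row (fblock m p D k)" "b < dim_col (fblock m p D k)"
  then have a: "a < m" and b: "b < m" unfolding fblock_def by auto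
  define \<sigma> where "\<sigma> j = (p - j) mod p" for j
  have "adj (fblock m p D k) $$ (a,b) = cnj (\<Sum>j<p. cis (- 2 * pi * real j * real k / real p) * complex_of_real (D j $$ (b,a)))"
    using a b unfolding fblock_def by simp
  also have "\<dots> = (\<Sum>j<p. cis (2 * pi * real j * real k / real p) * complex_of_real (D (\<sigma> j) $$ (a,b)))"
    by (simp add: tsym_entry[OF ts _ a b] \<sigma>_def cis_cnj)
  also have "\<dots> = (\<Sum>j<p. cis (- 2 * pi * real j * real k / real p) * complex_of_real (D j $$ (a,b)))"
  proof -
    have invol: "\<sigma> (\<sigma> j) = j" if "j < p" for j
      using that unfolding \<sigma>_def by (cases "j = 0") auto
    have rng: "\<sigma> j < p" if "j < p" for j using that unfolding \<sigma>_def by auto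
    have key: "cis (- 2 * pi * real (\<sigma> j) * real k / real p) = cis (2 * pi * real j * real k / real p)" if "j < p" for j
      unfolding \<sigma>_def by (rule cis_shift[OF that])
    show ?thesis
      by (rule sum.reindex_bij_witness[of _ \<sigma> \<sigma>]) (use invol rng key in auto)
  qed
  also have "\<dots> = fblock m p D k $$ (a,b)" using a b unfolding fblock_def by simp
  finally show "adj (fblock m p D k) $$ (a,b) = fblock m p D k $$ (a,b)" .
qed (auto simp: fblock_def)


definition lam :: "nat \<Rightarrow> nat \<Rightarrow> (nat \<Rightarrow> real mat) \<Rightarrow> real multiset" where
  "lam m p D = (\<Sum>k<p. evals (fblock m p D k))"

context fixes m p :: nat and D :: "nat \<Rightarrow> real mat" assumes ts: "tsym m p D"
begin

lemma herm_k: "adj (fblock m p D k) = fblock m p D k" by (rule fblock_hermitian[OF ts])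

lemma teig_lam: "teig m p D = image_mset complex_of_real (lam m p D)"
  unfolding teig_def lam_def image_mset_sumk
  using herm_summary(1)[OF fblock_carrier herm_k] by simp

lemma size_lam: "size (lam m p D) = m * p"
  unfolding lam_def size_multiset_sum using herm_summary(2)[OF fblock_carrier herm_k] by simp

lemma tsing_lam: "tsing m p D = image_mset abs (lam m p D)"
  unfolding tsing_def lam_def image_mset_sumk
  using herm_summary(3)[OF fblock_carrier herm_k] by simp

lemma tdet_lam: "Re (tdet m p D) = prod_mset (lam m p D)"
  unfolding tdet_def teig_lam by (simp add: of_real_hom.prod_mset_image)

lemma pow_lam: "sum_mset (image_mset (\<lambda>x. x ^ j) (lam m p D)) = (\<Sum>k<p. Re (\<Sum>i<m. (fblock m p D k ^\<^sub>m j) $$ (i,i)))"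
  unfolding lam_def image_mset_sumk sum_mset_sumk
  using herm_summary(4)[OF fblock_carrier herm_k] by simp

lemma TPSD_lam: "TPSD m p D \<Longrightarrow> x \<in># lam m p D \<Longrightarrow> 0 \<le> x"
  unfolding TPSD_def teig_lam by auto

lemma TPD_lam: "tensor m p D \<Longrightarrow> TPD m p D \<longleftrightarrow> (\<forall>x\<in>#lam m p D. 0 < x)"
  unfolding TPD_def teig_lam using ts by auto

lemma tnorm1_lam: assumes "tensor m p D"
  shows "tnorm1_negpow m p D q = (if \<forall>x\<in>#lam m p D. 0 < x
     then ennreal (sum_mset (image_mset (\<lambda>x. x powr (- q)) (lam m p D))) else \<infinity>)"
proof (cases "\<forall>x\<in>#lam m p D. 0 < x")
  case True
  have pos: "\<forall>x\<in>#evals (fblock m p D k). 0 < x" if k: "k < p" for k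
  proof
    fix x assume x: "x \<in># evals (fblock m p D k)"
    have "x \<in># lam m p D" unfolding lam_def in_sumk using k x by blast
    then show "0 < x" using True by blast
  qed
  have "(\<Sum>k<p. sum_mset (sing_mset (mat_powr (fblock m p D k) (- q))))
      = (\<Sum>k<p. sum_mset (image_mset (\<lambda>x. x powr (- q)) (evals (fblock m p D k))))"
  proof (rule sum.cong[OF refl])
    fix k assume "k \<in> {..<p}"
    then have k: "k < p" by simp
    show "sum_mset (sing_mset (mat_powr (fblock m p D k) (- q))) = sum_mset (image_mset (\<lambda>x. x powr (- q)) (evals (fblock m p D k)))"
      by (rule herm_summary(5)[OF fblock_carrier herm_k pos[OF k]])
  qed
  also have "\<dots> = sum_mset (image_mset (\<lambda>x. x powr (- q)) (lam m p D))"
    unfolding lam_def image_mset_sumk sum_mset_sumk ..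
  finally have calc: "(\<Sum>k<p. sum_mset (sing_mset (mat_powr (fblock m p D k) (- q)))) = sum_mset (image_mset (\<lambda>x. x powr (- q)) (lam m p D))" .
  have tpd: "TPD m p D" using TPD_lam[OF assms] True by blast
  show ?thesis unfolding tnorm1_negpow_def using tpd True calc by simp
next
  case False
  have tpd: "\<not> TPD m p D" using TPD_lam[OF assms] False by blast
  show ?thesis unfolding tnorm1_negpow_def using tpd False by (simp only: if_False)
qed

lemma le_tnorm_op: assumes "TPSD m p D" "x \<in># lam m p D" shows "x \<le> tnorm_op m p D"
proof -
  have "\<bar>x\<bar> \<in># tsing m p D" unfolding tsing_lam using assms(2) by simp
  then have "\<bar>x\<bar> \<le> tnorm_op m p D" unfolding tnorm_op_def by (intro Max_ge) auto
  then show ?thesis by simp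
qed

end


lemma sum_mset_sum_inner: "sum_mset (image_mset (\<lambda>x. \<Sum>i\<in>I. g i x) A) = (\<Sum>i\<in>I. sum_mset (image_mset (g i) A))"
  by (induction A) (auto simp: sum.distrib)

lemma sum_mset_abs_le: fixes f g :: "'b \<Rightarrow> real"
  assumes "\<And>x. x \<in># A \<Longrightarrow> \<bar>f x - g x\<bar> \<le> e"
  shows "\<bar>sum_mset (image_mset f A) - sum_mset (image_mset g A)\<bar> \<le> real (size A) * e"
  using assms
proof (induction A)
  case empty then show ?case by simp
next
  case (add x A)
  have "\<bar>f x - g x\<bar> \<le> e" using add.prems by simp
  moreover have "\<bar>sum_mset (image_mset f A) - sum_mset (image_mset g A)\<bar> \<le> real (size A) * e"
    using add by simp
  ultimately show ?case by (simp add: algebra_simps)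
qed

context
  fixes \<nu> :: "'a::metric_space measure" and D :: "'a \<Rightarrow> nat \<Rightarrow> real mat" and m p :: nat
  assumes sets: "sets \<nu> = sets borel"
    and cont: "\<And>j a b. j < p \<Longrightarrow> a < m \<Longrightarrow> b < m \<Longrightarrow> continuous_on UNIV (\<lambda>\<tau>. D \<tau> j $$ (a, b))"
    and ts: "\<And>\<tau>. tsym m p (D \<tau>)"
begin

lemma meas_borel: assumes "f \<in> borel_measurable borel" shows "f \<in> borel_measurable \<nu>"
  by (subst measurable_cong_sets[OF sets refl]) (rule assms)

lemma meas_entry: assumes a: "a < m" and b: "b < m"
  shows "(\<lambda>\<tau>. fblock m p (D \<tau>) k $$ (a,b)) \<in> borel_measurable \<nu>"
proof -
  have "continuous_on UNIV (\<lambda>\<tau>. \<Sum>j<p. cis (- 2 * pi * real j * real k / real p) * complex_of_real (D \<tau> j $$ (a,b)))"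
    by (intro continuous_intros) (auto intro: cont a b)
  then have "(\<lambda>\<tau>. \<Sum>j<p. cis (- 2 * pi * real j * real k / real p) * complex_of_real (D \<tau> j $$ (a,b))) \<in> borel_measurable \<nu>"
    by (intro meas_borel borel_measurable_continuous_onI)
  then show ?thesis unfolding fblock_def using a b by simp
qed

lemma meas_pow_entry: assumes a: "a < m" and b: "b < m"
  shows "(\<lambda>\<tau>. (fblock m p (D \<tau>) k ^\<^sub>m j) $$ (a,b)) \<in> borel_measurable \<nu>"
  using a b
proof (induction j arbitrary: a b)
  case 0
  then show ?case by (simp add: fblock_def)
next
  case (Suc j)
  have eq: "(fblock m p (D \<tau>) k ^\<^sub>m Suc j) $$ (a,b) = (\<Sum>l<m. (fblock m p (D \<tau>) k ^\<^sub>m j) $$ (a,l) * fblock m p (D \<tau>) k $$ (l,b))" for \<tau>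
  proof -
    have A: "fblock m p (D \<tau>) k ^\<^sub>m j \<in> carrier_mat m m"
      by (rule carrier_matI) (simp_all add: fblock_def)
    have "fblock m p (D \<tau>) k ^\<^sub>m Suc j = fblock m p (D \<tau>) k ^\<^sub>m j * fblock m p (D \<tau>) k" by simp
    then show ?thesis using mult_index_sum[OF A fblock_carrier Suc.prems] by simp
  qed
  show ?case unfolding eq
    by (intro borel_measurable_sum borel_measurable_times Suc.IH meas_entry Suc.prems) auto
qed

lemma meas_powsum: "(\<lambda>\<tau>. sum_mset (image_mset (\<lambda>x. x ^ j) (lam m p (D \<tau>)))) \<in> borel_measurable \<nu>"
proof -
  have "(\<lambda>\<tau>. Re ((fblock m p (D \<tau>) k ^\<^sub>m j) $$ (i,i))) \<in> borel_measurable \<nu>" if "i < m" for i k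
    using measurable_compose[OF meas_pow_entry[OF that that] borel_measurable_Re] by simp
  then show ?thesis unfolding pow_lam[OF ts] Re_sum
    by (intro borel_measurable_sum) auto
qed

lemma meas_poly: "(\<lambda>\<tau>. sum_mset (image_mset (\<lambda>x. \<Sum>i\<le>N. c i * x ^ i) (lam m p (D \<tau>)))) \<in> borel_measurable \<nu>"
  unfolding sum_mset_sum_inner sum_mset_distrib_left[symmetric]
  by (intro borel_measurable_sum borel_measurable_times borel_measurable_const meas_powsum)

lemma meas_S:
  fixes M :: real and f :: "real \<Rightarrow> real"
  assumes rng: "\<And>\<tau> x. x \<in># lam m p (D \<tau>) \<Longrightarrow> 0 \<le> x \<and> x \<le> M"
    and f: "continuous_on {0..M} f"
  shows "(\<lambda>\<tau>. sum_mset (image_mset f (lam m p (D \<tau>)))) \<in> borel_measurable \<nu>"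
proof -
  have "\<forall>n. \<exists>P. real_polynomial_function P \<and> (\<forall>x\<in>{0..M}. \<bar>f x - P x\<bar> < inverse (real (Suc n)))"
  proof
    fix n :: nat
    obtain P where "real_polynomial_function P" "\<And>x. x \<in> {0..M} \<Longrightarrow> \<bar>f x - P x\<bar> < inverse (real (Suc n))"
      using Stone_Weierstrass_real_polynomial_function[OF compact_Icc f, of "inverse (real (Suc n))"] by auto
    then show "\<exists>P. real_polynomial_function P \<and> (\<forall>x\<in>{0..M}. \<bar>f x - P x\<bar> < inverse (real (Suc n)))" by blast
  qed
  from choice[OF this] obtain P where PP: "\<forall>n. real_polynomial_function (P n) \<and> (\<forall>x\<in>{0..M}. \<bar>f x - P n x\<bar> < inverse (real (Suc n)))"
    by blast
  have P: "\<And>n. real_polynomial_function (P n)" using PP by blast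
  have Pa: "\<And>n x. x \<in> {0..M} \<Longrightarrow> \<bar>f x - P n x\<bar> < inverse (real (Suc n))" using PP by blast
  have measP: "(\<lambda>\<tau>. sum_mset (image_mset (P n) (lam m p (D \<tau>)))) \<in> borel_measurable \<nu>" for n
  proof -
    obtain c N where "P n = (\<lambda>x. \<Sum>i\<le>N. c i * x ^ i)"
      using P[of n] unfolding real_polynomial_function_iff_sum by blast
    then show ?thesis using meas_poly by simp
  qed
  show ?thesis
  proof (rule borel_measurable_LIMSEQ_real[OF _ measP])
    fix \<tau>
    let ?K = "real (size (lam m p (D \<tau>)))"
    have bound: "\<bar>sum_mset (image_mset (P n) (lam m p (D \<tau>))) - sum_mset (image_mset f (lam m p (D \<tau>)))\<bar> \<le> ?K * inverse (real (Suc n))" for n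
    proof (rule sum_mset_abs_le)
      fix x assume "x \<in># lam m p (D \<tau>)"
      then have "x \<in> {0..M}" using rng by auto
      then show "\<bar>P n x - f x\<bar> \<le> inverse (real (Suc n))" using Pa[of x n] by simp
    qed
    have "(\<lambda>n. ?K * inverse (real (Suc n))) \<longlonglongrightarrow> ?K * 0"
      by (intro tendsto_mult tendsto_const LIMSEQ_inverse_real_of_nat)
    then have lim0: "(\<lambda>n. ?K * inverse (real (Suc n))) \<longlonglongrightarrow> 0" by simp
    have ev: "\<forall>\<^sub>F n in sequentially. norm (sum_mset (image_mset (P n) (lam m p (D \<tau>))) - sum_mset (image_mset f (lam m p (D \<tau>))))
        \<le> norm (?K * inverse (real (Suc n)))"
    proof (intro always_eventually allI)
      fix n
      have "norm (?K * inverse (real (Suc n))) = ?K * inverse (real (Suc n))" by simp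
      then show "norm (sum_mset (image_mset (P n) (lam m p (D \<tau>))) - sum_mset (image_mset f (lam m p (D \<tau>))))
        \<le> norm (?K * inverse (real (Suc n)))" using bound[of n] by (simp only: real_norm_def)
    qed
    have "(\<lambda>n. sum_mset (image_mset (P n) (lam m p (D \<tau>))) - sum_mset (image_mset f (lam m p (D \<tau>)))) \<longlonglongrightarrow> 0"
      by (rule Lim_transform_bound[OF ev lim0])
    then show "(\<lambda>n. sum_mset (image_mset (P n) (lam m p (D \<tau>)))) \<longlonglongrightarrow> sum_mset (image_mset f (lam m p (D \<tau>)))"
      by (rule LIM_zero_cancel)
  qed
qed

end


lemma tendsto_sum_mset:
  fixes f :: "'b \<Rightarrow> 'c \<Rightarrow> real"
  assumes "\<And>x. x \<in># A \<Longrightarrow> ((\<lambda>q. f q x) \<longlongrightarrow> g x) F"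
  shows "((\<lambda>q. sum_mset (image_mset (f q) A)) \<longlongrightarrow> sum_mset (image_mset g A)) F"
  using assms by (induction A) (auto intro!: tendsto_add)

lemma tendsto_prod_mset:
  fixes f :: "'b \<Rightarrow> 'c \<Rightarrow> real"
  assumes "\<And>x. x \<in># A \<Longrightarrow> ((\<lambda>q. f q x) \<longlongrightarrow> g x) F"
  shows "((\<lambda>q. prod_mset (image_mset (f q) A)) \<longlongrightarrow> prod_mset (image_mset g A)) F"
  using assms by (induction A) (auto intro!: tendsto_mult)

lemma exp_sum_mset: fixes f :: "'b \<Rightarrow> real" shows "exp (sum_mset (image_mset f A)) = prod_mset (image_mset (\<lambda>x. exp (f x)) A)"
  by (induction A) (auto simp: exp_add)

lemma prod_mset_pos_real: "(\<And>x. x \<in># A \<Longrightarrow> 0 < x) \<Longrightarrow> 0 < prod_mset (A :: real multiset)"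
  by (induction A) auto

lemma ln_prod_mset: "(\<And>x. x \<in># A \<Longrightarrow> 0 < x) \<Longrightarrow> ln (prod_mset A) = sum_mset (image_mset ln (A :: real multiset))"
proof (induction A)
  case empty then show ?case by simp
next
  case (add x A)
  have pA: "0 < prod_mset A" using add.prems by (intro prod_mset_pos_real) auto
  have px: "0 < x" using add.prems by simp
  have "ln (prod_mset (add_mset x A)) = ln (x * prod_mset A)" by simp
  also have "\<dots> = ln x + ln (prod_mset A)" using px pA add.prems by (auto simp: ln_mult)
  also have "ln (prod_mset A) = sum_mset (image_mset ln A)" using add by simp
  finally show ?case by simp
qed

lemma exp_tangent: "exp a * (1 + y - a) \<le> exp (y::real)"
proof -
  have "1 + (y - a) \<le> exp (y - a)" by (rule exp_ge_add_one_self)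
  then have "exp a * (1 + (y - a)) \<le> exp a * exp (y - a)" by (intro mult_left_mono) auto
  also have "\<dots> = exp y" by (simp add: exp_diff)
  finally show ?thesis by (simp add: add_diff_eq)
qed

lemma jensen_exp_mset:
  fixes y :: "'b \<Rightarrow> real"
  assumes sz: "size A = n" and n: "n > 0"
  shows "exp ((1 / real n) * sum_mset (image_mset y A)) \<le> (1 / real n) * sum_mset (image_mset (\<lambda>x. exp (y x)) A)"
proof -
  define a where "a = (1 / real n) * sum_mset (image_mset y A)"
  have "sum_mset (image_mset (\<lambda>x. exp a * (1 + y x - a)) A) \<le> sum_mset (image_mset (\<lambda>x. exp (y x)) A)"
    by (intro sum_mset_mono exp_tangent)
  also have "sum_mset (image_mset (\<lambda>x. exp a * (1 + y x - a)) A) = exp a * (real (size A) + sum_mset (image_mset y A) - real (size A) * a)"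
    by (induction A) (auto simp: algebra_simps)
  also have "real (size A) + sum_mset (image_mset y A) - real (size A) * a = real n"
  proof -
    have gen: "\<And>S. real n * ((1 / real n) * S) = S" using n by simp
    have "real n * a = sum_mset (image_mset y A)" unfolding a_def by (rule gen)
    then show ?thesis unfolding sz by simp
  qed
  finally have H: "exp a * real n \<le> sum_mset (image_mset (\<lambda>x. exp (y x)) A)" by simp
  define Sv where "Sv = sum_mset (image_mset (\<lambda>x. exp (y x)) A)"
  have "exp a \<le> Sv / real n" using H n unfolding Sv_def[symmetric] by (simp add: le_divide_eq)
  then show ?thesis unfolding a_def[symmetric] Sv_def[symmetric] by simp
qed

lemma ln_abs_bound: fixes x M :: real assumes x: "0 < x" "x \<le> M" and M: "1 \<le> M"
  shows "\<bar>ln x\<bar> \<le> x powr (-1) + ln M"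
proof (cases "x \<le> 1")
  case True
  have "ln (1/x) \<le> 1/x - 1" using x by (intro ln_le_minus_one) auto
  then have "- ln x \<le> 1/x" using x by (simp add: ln_div)
  moreover have "ln x \<le> 0" using True x by simp
  moreover have "0 \<le> ln M" using M by simp
  moreover have "x powr (-1) = 1/x" using x by (simp add: powr_minus divide_inverse)
  ultimately show ?thesis by linarith
next
  case False
  have "ln x \<le> ln M" using x False by simp
  moreover have "0 \<le> ln x" using False by simp
  moreover have "0 < x powr (-1)" using x by simp
  ultimately show ?thesis by linarith
qed

lemma exp_chord: fixes q a :: real assumes "0 \<le> q" "q \<le> 1" shows "exp (q * a) \<le> 1 + q * (exp a - 1)"
proof -
  have "exp ((1 - q) *\<^sub>R 0 + q *\<^sub>R a) \<le> (1 - q) * exp 0 + q * exp a"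
    by (rule convex_onD[OF exp_convex]) (use assms in auto)
  then show ?thesis by (simp add: algebra_simps)
qed

lemma powr_diff_bound: fixes q x M :: real assumes q: "0 < q" "q \<le> 1" and x: "0 < x" "x \<le> M" and M: "1 \<le> M"
  shows "\<bar>(x powr (-q) - 1) / q\<bar> \<le> x powr (-1) + ln M"
proof -
  define a where "a = - ln x"
  have xq: "x powr (-q) = exp (q * a)" unfolding a_def using x by (simp add: powr_def)
  have x1: "x powr (-1) = exp a" unfolding a_def using x by (simp add: powr_def)
  have lnM: "0 \<le> ln M" using M by simp
  show ?thesis
  proof (cases "a \<ge> 0")
    case True
    have lo: "0 \<le> exp (q * a) - 1" using True q by simp
    have hi: "exp (q * a) - 1 \<le> q * (exp a - 1)" using exp_chord[of q a] q by simp
    have "\<bar>(exp (q * a) - 1) / q\<bar> = (exp (q * a) - 1) / q" using lo q by simp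
    also have "\<dots> \<le> exp a - 1" using hi q by (simp add: divide_le_eq mult.commute)
    finally show ?thesis unfolding xq x1 using lnM by simp
  next
    case False
    have "q * a \<le> 0" using False q by (intro mult_nonneg_nonpos) auto
    then have hi: "exp (q * a) - 1 \<le> 0" by simp
    have lo: "q * a \<le> exp (q * a) - 1" using exp_ge_add_one_self[of "q * a"] by linarith
    have "\<bar>(exp (q * a) - 1) / q\<bar> = (1 - exp (q * a)) / q" using hi q by (simp add: abs_div divide_simps)
    also have "\<dots> \<le> - a" using lo q by (simp add: divide_le_eq mult.commute)
    also have "- a \<le> ln M" unfolding a_def using x by simp
    finally show ?thesis unfolding xq using x1 by (smt (verit) exp_gt_zero)
  qed
qed

lemma exp_deriv_limit: "((\<lambda>q. (exp (q * a) - 1) / q) \<longlongrightarrow> (a::real)) (at_right 0)"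
proof -
  have "((\<lambda>q. exp (q * a)) has_field_derivative exp (0 * a) * a) (at 0 within {0<..})"
    by (auto intro!: derivative_eq_intros)
  then have "((\<lambda>y. (exp (y * a) - exp (0 * a)) / (y - 0)) \<longlongrightarrow> exp (0 * a) * a) (at 0 within {0<..})"
    by (rule has_field_derivative_iff[THEN iffD1])
  then show ?thesis by simp
qed


lemma sum_mset_abs_le_real: "\<bar>sum_mset (image_mset f A)\<bar> \<le> sum_mset (image_mset (\<lambda>x. \<bar>f x\<bar>) A)" for f :: "'b \<Rightarrow> real"
  by (induction A) (auto intro: order_trans[OF abs_triangle_ineq])

locale ana =
  fixes \<nu> :: "'a measure" and \<Lambda> :: "'a \<Rightarrow> real multiset" and n :: nat and M :: real
  assumes prob: "prob_space \<nu>"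
    and n: "n \<ge> 1"
    and sz: "\<And>\<tau>. size (\<Lambda> \<tau>) = n"
    and rng: "\<And>\<tau> x. x \<in># \<Lambda> \<tau> \<Longrightarrow> 0 \<le> x \<and> x \<le> M"
    and M1: "1 \<le> M"
    and measS: "\<And>f :: real \<Rightarrow> real. continuous_on {0..M} f \<Longrightarrow> (\<lambda>\<tau>. sum_mset (image_mset f (\<Lambda> \<tau>))) \<in> borel_measurable \<nu>"
begin

definition Gd where "Gd = {\<tau>. \<forall>x\<in>#\<Lambda> \<tau>. 0 < x}"
definition G where "G q \<tau> = (if \<forall>x\<in>#\<Lambda> \<tau>. 0 < x then ennreal (sum_mset (image_mset (\<lambda>x. x powr (-q)) (\<Lambda> \<tau>))) else \<infinity>)"
definition H where "H q \<tau> = (if \<tau> \<in> Gd then sum_mset (image_mset (\<lambda>x. x powr (-q)) (\<Lambda> \<tau>)) else 0)"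

definition c :: "nat \<Rightarrow> real" where "c k = inverse (real (Suc k))"

lemma c_pos: "0 < c k" unfolding c_def by simp

lemma c_lim: "c \<longlonglongrightarrow> 0" unfolding c_def by (rule LIMSEQ_inverse_real_of_nat)

lemma meas_prod: "(\<lambda>\<tau>. prod_mset (\<Lambda> \<tau>)) \<in> borel_measurable \<nu>"
proof (rule borel_measurable_LIMSEQ_real)
  fix k
  have cont: "continuous_on {0..M} (\<lambda>x. ln (max x (c k)))"
    using c_pos[of k] by (intro continuous_intros) auto
  have "(\<lambda>\<tau>. exp (sum_mset (image_mset (\<lambda>x. ln (max x (c k))) (\<Lambda> \<tau>)))) \<in> borel_measurable \<nu>"
    using measurable_compose[OF measS[OF cont] borel_measurable_exp] by simp
  moreover have "exp (sum_mset (image_mset (\<lambda>x. ln (max x (c k))) (\<Lambda> \<tau>))) = prod_mset (image_mset (\<lambda>x. max x (c k)) (\<Lambda> \<tau>))" for \<tau>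
    unfolding exp_sum_mset using c_pos[of k] by (intro arg_cong[where f = prod_mset] image_mset_cong) auto
  ultimately show "(\<lambda>\<tau>. prod_mset (image_mset (\<lambda>x. max x (c k)) (\<Lambda> \<tau>))) \<in> borel_measurable \<nu>" by simp
next
  fix \<tau>
  have "(\<lambda>k. prod_mset (image_mset (\<lambda>x. max x (c k)) (\<Lambda> \<tau>))) \<longlonglongrightarrow> prod_mset (image_mset (\<lambda>x. max x 0) (\<Lambda> \<tau>))"
    by (intro tendsto_prod_mset tendsto_max tendsto_const c_lim)
  also have "image_mset (\<lambda>x. max x 0) (\<Lambda> \<tau>) = image_mset id (\<Lambda> \<tau>)"
    by (intro image_mset_cong) (use rng[of _ \<tau>] in auto)
  also have "image_mset id (\<Lambda> \<tau>) = \<Lambda> \<tau>" by simp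
  finally show "(\<lambda>k. prod_mset (image_mset (\<lambda>x. max x (c k)) (\<Lambda> \<tau>))) \<longlonglongrightarrow> prod_mset (\<Lambda> \<tau>)" .
qed

lemma Gd_prod: "\<tau> \<in> Gd \<longleftrightarrow> 0 < prod_mset (\<Lambda> \<tau>)"
proof
  assume "\<tau> \<in> Gd" then show "0 < prod_mset (\<Lambda> \<tau>)" unfolding Gd_def by (intro prod_mset_pos_real) auto
next
  assume p: "0 < prod_mset (\<Lambda> \<tau>)"
  have "0 \<notin># \<Lambda> \<tau>"
  proof
    assume "0 \<in># \<Lambda> \<tau>"
    then obtain B where "\<Lambda> \<tau> = add_mset 0 B" by (metis multi_member_split)
    then have "prod_mset (\<Lambda> \<tau>) = 0" by simp
    with p show False by simp
  qed
  then show "\<tau> \<in> Gd" unfolding Gd_def using rng[of _ \<tau>] by (auto simp: le_less)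
qed

lemma Gd_sets: "Gd \<inter> space \<nu> \<in> sets \<nu>"
proof -
  have "Gd \<inter> space \<nu> = {\<tau> \<in> space \<nu>. (\<lambda>_. 0) \<tau> < prod_mset (\<Lambda> \<tau>)}" using Gd_prod by auto
  also have "\<dots> \<in> sets \<nu>" by (intro borel_measurable_less borel_measurable_const meas_prod)
  finally show ?thesis .
qed

lemma ev_max: assumes "\<tau> \<in> Gd"
  shows "\<forall>\<^sub>F k in sequentially. \<forall>x\<in>#\<Lambda> \<tau>. max x (c k) = x"
proof -
  have ne: "set_mset (\<Lambda> \<tau>) \<noteq> {}" using sz[of \<tau>] n by auto
  define m0 where "m0 = Min (set_mset (\<Lambda> \<tau>))"
  have m0: "0 < m0" unfolding m0_def using assms ne unfolding Gd_def by (subst Min_gr_iff) auto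
  have "\<forall>\<^sub>F k in sequentially. c k < m0" by (rule order_tendstoD(2)[OF c_lim m0])
  then show ?thesis
  proof (rule eventually_mono)
    fix k assume "c k < m0"
    then show "\<forall>x\<in>#\<Lambda> \<tau>. max x (c k) = x" unfolding m0_def using ne by (auto simp: max_def)
  qed
qed

lemma meas_H: "H q \<in> borel_measurable \<nu>"
proof (rule borel_measurable_LIMSEQ_real)
  fix k
  have cont: "continuous_on {0..M} (\<lambda>x. max x (c k) powr (-q))"
    using c_pos[of k] by (intro continuous_intros) auto
  show "(\<lambda>\<tau>. if \<tau> \<in> Gd then sum_mset (image_mset (\<lambda>x. max x (c k) powr (-q)) (\<Lambda> \<tau>)) else 0) \<in> borel_measurable \<nu>"
    by (intro measurable_If_set measS[OF cont] borel_measurable_const Gd_sets)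
next
  fix \<tau>
  show "(\<lambda>k. if \<tau> \<in> Gd then sum_mset (image_mset (\<lambda>x. max x (c k) powr (-q)) (\<Lambda> \<tau>)) else 0) \<longlonglongrightarrow> H q \<tau>"
  proof (cases "\<tau> \<in> Gd")
    case True
    have "\<forall>\<^sub>F k in sequentially. (if \<tau> \<in> Gd then sum_mset (image_mset (\<lambda>x. max x (c k) powr (-q)) (\<Lambda> \<tau>)) else 0) = H q \<tau>"
      using ev_max[OF True]
    proof (rule eventually_mono)
      fix k assume "\<forall>x\<in>#\<Lambda> \<tau>. max x (c k) = x"
      then show "(if \<tau> \<in> Gd then sum_mset (image_mset (\<lambda>x. max x (c k) powr (-q)) (\<Lambda> \<tau>)) else 0) = H q \<tau>"
        unfolding H_def using True by (auto intro!: arg_cong[where f = sum_mset] image_mset_cong)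
    qed
    then show ?thesis by (rule tendsto_eventually)
  next
    case False
    then show ?thesis unfolding H_def by simp
  qed
qed

lemma G_H: "G q \<tau> = (if \<tau> \<in> Gd then ennreal (H q \<tau>) else \<infinity>)"
  unfolding G_def H_def Gd_def by simp

lemma meas_G: "G q \<in> borel_measurable \<nu>"
  unfolding G_H[abs_def]
  by (intro measurable_If_set measurable_compose[OF meas_H measurable_ennreal] borel_measurable_const Gd_sets)

end


sublocale ana \<subseteq> P: prob_space \<nu> by (rule prob)

lemma sum_mset_nonneg_real: "(\<And>x. x \<in># A \<Longrightarrow> 0 \<le> f x) \<Longrightarrow> 0 \<le> sum_mset (image_mset f A)" for f :: "'b \<Rightarrow> real"
  by (induction A) auto

lemma sum_mset_cmul: "sum_mset (image_mset (\<lambda>x. c * f x) A) = c * sum_mset (image_mset f A)" for f :: "'b \<Rightarrow> real"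
  by (induction A) (auto simp: algebra_simps)

locale ana2 = ana +
  assumes integ: "\<And>q. q > 0 \<Longrightarrow> (\<integral>\<^sup>+\<tau>. G q \<tau> \<partial>\<nu>) < \<infinity>"
begin

lemma n_pos: "0 < real n" using n by simp

lemma AE_Gd: "AE \<tau> in \<nu>. \<tau> \<in> Gd"
proof -
  have "(\<integral>\<^sup>+\<tau>. G 1 \<tau> \<partial>\<nu>) \<noteq> \<infinity>" using integ[of 1] by simp
  from nn_integral_noteq_infinite[OF meas_G this] show ?thesis
    by (rule eventually_mono) (auto simp: G_H split: if_splits)
qed

lemma H_nonneg: "0 \<le> H q \<tau>"
  unfolding H_def by (auto intro!: sum_mset_nonneg_real)

lemma int_H: assumes q: "q > 0" shows "integrable \<nu> (H q)"
proof (rule integrableI_bounded[OF meas_H])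
  have "(\<integral>\<^sup>+\<tau>. ennreal (norm (H q \<tau>)) \<partial>\<nu>) = (\<integral>\<^sup>+\<tau>. G q \<tau> \<partial>\<nu>)"
    using AE_Gd by (intro nn_integral_cong_AE) (auto elim!: eventually_mono simp: G_H H_nonneg)
  then show "(\<integral>\<^sup>+\<tau>. ennreal (norm (H q \<tau>)) \<partial>\<nu>) < \<infinity>" using integ[OF q] by simp
qed

definition h where "h q \<tau> = H q \<tau> / real n"

lemma meas_h: "h q \<in> borel_measurable \<nu>" unfolding h_def[abs_def] by (intro borel_measurable_divide meas_H borel_measurable_const)

lemma int_h: "q > 0 \<Longrightarrow> integrable \<nu> (h q)" unfolding h_def[abs_def] by (intro integrable_divide int_H)

lemma h_nonneg: "0 \<le> h q \<tau>" unfolding h_def using H_nonneg n_pos by simp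

lemma E_eq: assumes q: "q > 0"
  shows "enn2real (\<integral>\<^sup>+\<tau>. G q \<tau> / ennreal (real n) \<partial>\<nu>) = (\<integral>\<tau>. h q \<tau> \<partial>\<nu>)"
proof -
  have "(\<integral>\<^sup>+\<tau>. G q \<tau> / ennreal (real n) \<partial>\<nu>) = (\<integral>\<^sup>+\<tau>. ennreal (h q \<tau>) \<partial>\<nu>)"
    using AE_Gd by (intro nn_integral_cong_AE)
      (auto elim!: eventually_mono simp: G_H h_def divide_ennreal[OF H_nonneg n_pos])
  moreover have "(\<integral>\<tau>. h q \<tau> \<partial>\<nu>) = enn2real (\<integral>\<^sup>+\<tau>. ennreal (h q \<tau>) \<partial>\<nu>)"
    by (rule integral_eq_nn_integral[OF meas_h]) (simp add: h_nonneg)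
  ultimately show ?thesis by simp
qed

lemma h_Gd: "\<tau> \<in> Gd \<Longrightarrow> h q \<tau> = sum_mset (image_mset (\<lambda>x. x powr (-q)) (\<Lambda> \<tau>)) / real n"
  unfolding h_def H_def by simp

definition L where "L \<tau> = ln (prod_mset (\<Lambda> \<tau>)) / real n"

lemma meas_L: "L \<in> borel_measurable \<nu>"
  unfolding L_def[abs_def]
  by (intro borel_measurable_divide borel_measurable_const borel_measurable_ln[OF meas_prod])

lemma L_Gd: assumes "\<tau> \<in> Gd" shows "L \<tau> = sum_mset (image_mset ln (\<Lambda> \<tau>)) / real n"
  unfolding L_def using assms unfolding Gd_def by (subst ln_prod_mset) auto

lemma bound_L: assumes g: "\<tau> \<in> Gd" shows "\<bar>L \<tau>\<bar> \<le> h 1 \<tau> + ln M"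
proof -
  have "\<bar>sum_mset (image_mset ln (\<Lambda> \<tau>))\<bar> \<le> sum_mset (image_mset (\<lambda>x. \<bar>ln x\<bar>) (\<Lambda> \<tau>))"
    by (rule sum_mset_abs_le_real)
  also have "\<dots> \<le> sum_mset (image_mset (\<lambda>x. x powr (-1) + ln M) (\<Lambda> \<tau>))"
  proof (rule sum_mset_mono)
    fix x assume x: "x \<in># \<Lambda> \<tau>"
    then have "0 < x" using g unfolding Gd_def by auto
    then show "\<bar>ln x\<bar> \<le> x powr (-1) + ln M" using ln_abs_bound[of x M] rng[OF x] M1 by auto
  qed
  also have "\<dots> = sum_mset (image_mset (\<lambda>x. x powr (-1)) (\<Lambda> \<tau>)) + real n * ln M"
    by (simp add: sum_mset.distrib sz)
  finally have "\<bar>sum_mset (image_mset ln (\<Lambda> \<tau>))\<bar> / real n \<le> (sum_mset (image_mset (\<lambda>x. x powr (-1)) (\<Lambda> \<tau>)) + real n * ln M) / real n"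
    using n_pos by (intro divide_right_mono) auto
  then show ?thesis unfolding L_Gd[OF g] h_Gd[OF g] using n_pos by (simp add: add_divide_distrib)
qed

lemma int_w: "integrable \<nu> (\<lambda>\<tau>. h 1 \<tau> + ln M)"
proof -
  have "integrable \<nu> (h 1)" by (rule int_h) simp
  moreover have "integrable \<nu> (\<lambda>_. ln M)" by simp
  ultimately show ?thesis by (rule Bochner_Integration.integrable_add)
qed

lemma int_L: "integrable \<nu> L"
proof (rule Bochner_Integration.integrable_bound[OF int_w meas_L])
  show "AE \<tau> in \<nu>. norm (L \<tau>) \<le> norm (h 1 \<tau> + ln M)"
    using AE_Gd
  proof (rule eventually_mono)
    fix \<tau> assume g: "\<tau> \<in> Gd"
    have "0 \<le> h 1 \<tau> + ln M" using h_nonneg[of 1 \<tau>] M1 by (simp add: ln_ge_zero add_nonneg_nonneg)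
    then show "norm (L \<tau>) \<le> norm (h 1 \<tau> + ln M)" using bound_L[OF g] by simp
  qed
qed

lemma integral_affine: fixes f :: "'a \<Rightarrow> real" assumes "integrable \<nu> f"
  shows "(\<integral>\<tau>. a + b * f \<tau> \<partial>\<nu>) = a + b * (\<integral>\<tau>. f \<tau> \<partial>\<nu>)"
proof -
  have i1: "integrable \<nu> (\<lambda>_. a)" by simp
  have i2: "integrable \<nu> (\<lambda>\<tau>. b * f \<tau>)" using assms by simp
  have "(\<integral>\<tau>. a + b * f \<tau> \<partial>\<nu>) = (\<integral>\<tau>. a \<partial>\<nu>) + (\<integral>\<tau>. b * f \<tau> \<partial>\<nu>)"
    by (rule Bochner_Integration.integral_add[OF i1 i2])
  also have "(\<integral>\<tau>. a \<partial>\<nu>) = a" using P.prob_space by (simp add: lebesgue_integral_const)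
  also have "(\<integral>\<tau>. b * f \<tau> \<partial>\<nu>) = b * (\<integral>\<tau>. f \<tau> \<partial>\<nu>)" by (rule integral_mult_right_zero)
  finally show ?thesis .
qed

lemma lower: assumes q: "q > 0"
  shows "exp (- q * (\<integral>\<tau>. L \<tau> \<partial>\<nu>)) \<le> (\<integral>\<tau>. h q \<tau> \<partial>\<nu>)"
proof -
  define I where "I = (\<integral>\<tau>. L \<tau> \<partial>\<nu>)"
  have pw: "exp (- q * I) * (1 + q * I) + (- q * exp (- q * I)) * L \<tau> \<le> h q \<tau>" if g: "\<tau> \<in> Gd" for \<tau>
  proof -
    have pos: "\<And>x. x \<in># \<Lambda> \<tau> \<Longrightarrow> 0 < x" using g unfolding Gd_def by auto
    have e1: "- q * L \<tau> = (1 / real n) * sum_mset (image_mset (\<lambda>x. - q * ln x) (\<Lambda> \<tau>))"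
    proof -
      have ar: "\<And>s. - q * (s / real n) = (1 / real n) * (- q * s)" by simp
      show ?thesis unfolding L_Gd[OF g] sum_mset_cmul by (rule ar)
    qed
    have e2: "sum_mset (image_mset (\<lambda>x. exp (- q * ln x)) (\<Lambda> \<tau>)) = sum_mset (image_mset (\<lambda>x. x powr (-q)) (\<Lambda> \<tau>))"
      using pos by (intro arg_cong[where f = sum_mset] image_mset_cong) (auto simp: powr_def)
    have j: "exp ((1 / real n) * sum_mset (image_mset (\<lambda>x. - q * ln x) (\<Lambda> \<tau>)))
        \<le> (1 / real n) * sum_mset (image_mset (\<lambda>x. exp (- q * ln x)) (\<Lambda> \<tau>))"
      by (rule jensen_exp_mset[OF sz]) (use n in simp)
    have "exp (- q * I) * (1 + (- q * L \<tau>) - (- q * I)) \<le> exp (- q * L \<tau>)" by (rule exp_tangent)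
    also have "\<dots> \<le> h q \<tau>"
    proof -
      have ar: "\<And>s. (1 / real n) * s = s / real n" by simp
      show ?thesis using j unfolding e1[symmetric] e2 h_Gd[OF g] by (simp only: ar)
    qed
    finally show ?thesis by (simp add: algebra_simps)
  qed
  have "(\<integral>\<tau>. exp (- q * I) * (1 + q * I) + (- q * exp (- q * I)) * L \<tau> \<partial>\<nu>) \<le> (\<integral>\<tau>. h q \<tau> \<partial>\<nu>)"
  proof (rule integral_mono_AE)
    show "integrable \<nu> (\<lambda>\<tau>. exp (- q * I) * (1 + q * I) + (- q * exp (- q * I)) * L \<tau>)"
      using int_L by simp
    show "integrable \<nu> (h q)" by (rule int_h[OF q])
    show "AE \<tau> in \<nu>. exp (- q * I) * (1 + q * I) + (- q * exp (- q * I)) * L \<tau> \<le> h q \<tau>"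
      using AE_Gd by (rule eventually_mono) (rule pw)
  qed
  also have "(\<integral>\<tau>. exp (- q * I) * (1 + q * I) + (- q * exp (- q * I)) * L \<tau> \<partial>\<nu>) = exp (- q * I)"
    unfolding integral_affine[OF int_L] I_def[symmetric] by (simp add: algebra_simps)
  finally show ?thesis unfolding I_def .
qed

end


lemma sum_mset_diff_div: "q \<noteq> 0 \<Longrightarrow> sum_mset (image_mset (\<lambda>x. (f x - 1) / q) A) = (sum_mset (image_mset f A) - real (size A)) / q"
  for f :: "'b \<Rightarrow> real"
  by (induction A) (auto simp: field_simps)

lemma sum_mset_neg: "sum_mset (image_mset (\<lambda>x. - f x) A) = - sum_mset (image_mset f A)" for f :: "'b \<Rightarrow> real"
  by (induction A) auto

context ana2
begin

definition F where "F q \<tau> = (h q \<tau> - 1) / q"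

definition I where "I = (\<integral>\<tau>. L \<tau> \<partial>\<nu>)"

lemma meas_F: "F q \<in> borel_measurable \<nu>"
  unfolding F_def[abs_def] by (intro borel_measurable_divide borel_measurable_diff meas_h borel_measurable_const)

lemma F_affine: "F q \<tau> = - 1 / q + (1 / q) * h q \<tau>"
  unfolding F_def by (cases "q = 0") (simp_all add: field_simps)

lemma int_F: assumes q: "q > 0" shows "(\<integral>\<tau>. F q \<tau> \<partial>\<nu>) = ((\<integral>\<tau>. h q \<tau> \<partial>\<nu>) - 1) / q"
  unfolding F_affine integral_affine[OF int_h[OF q]] using q by (simp add: field_simps)

lemma Epos: assumes q: "q > 0" shows "0 < (\<integral>\<tau>. h q \<tau> \<partial>\<nu>)"
  by (rule less_le_trans[OF exp_gt_zero lower[OF q]])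

lemma lower': assumes q: "q > 0" shows "- I \<le> ln (\<integral>\<tau>. h q \<tau> \<partial>\<nu>) / q"
proof -
  have "- q * I = ln (exp (- q * I))" by simp
  also have "\<dots> \<le> ln (\<integral>\<tau>. h q \<tau> \<partial>\<nu>)" using lower[OF q] Epos[OF q] unfolding I_def by (subst ln_le_cancel_iff) auto
  finally have "- q * I \<le> ln (\<integral>\<tau>. h q \<tau> \<partial>\<nu>)" .
  then show ?thesis using q by (simp add: le_divide_eq mult.commute)
qed

lemma upper: assumes q: "q > 0" shows "ln (\<integral>\<tau>. h q \<tau> \<partial>\<nu>) / q \<le> (\<integral>\<tau>. F q \<tau> \<partial>\<nu>)"
proof -
  have "ln (\<integral>\<tau>. h q \<tau> \<partial>\<nu>) \<le> (\<integral>\<tau>. h q \<tau> \<partial>\<nu>) - 1" by (rule ln_le_minus_one[OF Epos[OF q]])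
  then show ?thesis unfolding int_F[OF q] using q by (simp add: divide_right_mono)
qed

lemma F_Gd: assumes g: "\<tau> \<in> Gd" and q: "q \<noteq> 0"
  shows "F q \<tau> = (1 / real n) * sum_mset (image_mset (\<lambda>x. (x powr (-q) - 1) / q) (\<Lambda> \<tau>))"
proof -
  have "F q \<tau> = (sum_mset (image_mset (\<lambda>x. x powr (-q)) (\<Lambda> \<tau>)) / real n - 1) / q"
    unfolding F_def h_Gd[OF g] ..
  also have "\<dots> = (1 / real n) * ((sum_mset (image_mset (\<lambda>x. x powr (-q)) (\<Lambda> \<tau>)) - real (size (\<Lambda> \<tau>))) / q)"
    unfolding sz using n_pos by (simp add: field_simps)
  also have "\<dots> = (1 / real n) * sum_mset (image_mset (\<lambda>x. (x powr (-q) - 1) / q) (\<Lambda> \<tau>))"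
    unfolding sum_mset_diff_div[OF q] ..
  finally show ?thesis .
qed

lemma F_lim_pt: assumes g: "\<tau> \<in> Gd" shows "((\<lambda>q. F q \<tau>) \<longlongrightarrow> - L \<tau>) (at_right 0)"
proof -
  have pos: "\<And>x. x \<in># \<Lambda> \<tau> \<Longrightarrow> 0 < x" using g unfolding Gd_def by auto
  have ev: "\<forall>\<^sub>F q in at_right 0. (1 / real n) * sum_mset (image_mset (\<lambda>x. (exp (q * (- ln x)) - 1) / q) (\<Lambda> \<tau>)) = F q \<tau>"
    using eventually_at_right_less[of 0]
  proof (rule eventually_mono)
    fix q :: real assume q: "0 < q"
    have "sum_mset (image_mset (\<lambda>x. (exp (q * (- ln x)) - 1) / q) (\<Lambda> \<tau>)) = sum_mset (image_mset (\<lambda>x. (x powr (-q) - 1) / q) (\<Lambda> \<tau>))"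
      using pos by (intro arg_cong[where f = sum_mset] image_mset_cong) (auto simp: powr_def)
    then show "(1 / real n) * sum_mset (image_mset (\<lambda>x. (exp (q * (- ln x)) - 1) / q) (\<Lambda> \<tau>)) = F q \<tau>"
      using F_Gd[OF g, of q] q by simp
  qed
  have "((\<lambda>q. (1 / real n) * sum_mset (image_mset (\<lambda>x. (exp (q * (- ln x)) - 1) / q) (\<Lambda> \<tau>)))
      \<longlongrightarrow> (1 / real n) * sum_mset (image_mset (\<lambda>x. - ln x) (\<Lambda> \<tau>))) (at_right 0)"
    by (intro tendsto_mult tendsto_const tendsto_sum_mset exp_deriv_limit)
  also have "(1 / real n) * sum_mset (image_mset (\<lambda>x. - ln x) (\<Lambda> \<tau>)) = - L \<tau>"
  proof -
    have ar: "\<And>s. (1 / real n) * (- s) = - (s / real n)" by simp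
    show ?thesis unfolding sum_mset_neg L_Gd[OF g] by (rule ar)
  qed
  finally show ?thesis using tendsto_cong[OF ev] by simp
qed

lemma F_bound: assumes g: "\<tau> \<in> Gd" and q: "0 < q" "q \<le> 1"
  shows "\<bar>F q \<tau>\<bar> \<le> h 1 \<tau> + ln M"
proof -
  have "\<bar>sum_mset (image_mset (\<lambda>x. (x powr (-q) - 1) / q) (\<Lambda> \<tau>))\<bar> \<le> sum_mset (image_mset (\<lambda>x. \<bar>(x powr (-q) - 1) / q\<bar>) (\<Lambda> \<tau>))"
    by (rule sum_mset_abs_le_real)
  also have "\<dots> \<le> sum_mset (image_mset (\<lambda>x. x powr (-1) + ln M) (\<Lambda> \<tau>))"
  proof (rule sum_mset_mono)
    fix x assume x: "x \<in># \<Lambda> \<tau>"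
    then have "0 < x" using g unfolding Gd_def by auto
    then show "\<bar>(x powr (-q) - 1) / q\<bar> \<le> x powr (-1) + ln M" using powr_diff_bound[OF q, of x M] rng[OF x] M1 by auto
  qed
  also have "\<dots> = sum_mset (image_mset (\<lambda>x. x powr (-1)) (\<Lambda> \<tau>)) + real n * ln M"
    by (simp add: sum_mset.distrib sz)
  finally have A: "\<bar>sum_mset (image_mset (\<lambda>x. (x powr (-q) - 1) / q) (\<Lambda> \<tau>))\<bar> \<le> sum_mset (image_mset (\<lambda>x. x powr (-1)) (\<Lambda> \<tau>)) + real n * ln M" .
  have "\<bar>F q \<tau>\<bar> = \<bar>sum_mset (image_mset (\<lambda>x. (x powr (-q) - 1) / q) (\<Lambda> \<tau>))\<bar> / real n"
  proof -
    have ar: "\<And>s. \<bar>(1 / real n) * s\<bar> = \<bar>s\<bar> / real n" using n_pos by (simp add: abs_mult)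
    have qne: "q \<noteq> 0" using q by simp
    show ?thesis unfolding F_Gd[OF g qne] by (rule ar)
  qed
  also have "\<dots> \<le> (sum_mset (image_mset (\<lambda>x. x powr (-1)) (\<Lambda> \<tau>)) + real n * ln M) / real n"
    using A n_pos by (intro divide_right_mono) auto
  also have "\<dots> = h 1 \<tau> + ln M" unfolding h_Gd[OF g] using n_pos by (simp add: add_divide_distrib)
  finally show ?thesis .
qed

lemma int_F_lim: "((\<lambda>q. (\<integral>\<tau>. F q \<tau> \<partial>\<nu>)) \<longlongrightarrow> - I) (at_right 0)"
proof -
  have fm: "(\<lambda>\<tau>. - L \<tau>) \<in> borel_measurable \<nu>" using meas_L by simp
  have sm: "\<And>t. (\<lambda>\<tau>. F (inverse t) \<tau>) \<in> borel_measurable \<nu>" using meas_F by simp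
  have lim: "AE \<tau> in \<nu>. ((\<lambda>t. F (inverse t) \<tau>) \<longlongrightarrow> - L \<tau>) at_top"
    using AE_Gd
  proof (rule eventually_mono)
    fix \<tau> assume g: "\<tau> \<in> Gd"
    show "((\<lambda>t. F (inverse t) \<tau>) \<longlongrightarrow> - L \<tau>) at_top"
      by (rule filterlim_compose[OF F_lim_pt[OF g] filterlim_inverse_at_right_top])
  qed
  have bnd: "\<forall>\<^sub>F t in at_top. AE \<tau> in \<nu>. norm (F (inverse t) \<tau>) \<le> h 1 \<tau> + ln M"
    using eventually_ge_at_top[of "1::real"]
  proof (rule eventually_mono)
    fix t :: real assume t: "1 \<le> t"
    show "AE \<tau> in \<nu>. norm (F (inverse t) \<tau>) \<le> h 1 \<tau> + ln M"
      using AE_Gd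
    proof (rule eventually_mono)
      fix \<tau> assume g: "\<tau> \<in> Gd"
      have "0 < inverse t" using t by auto
      moreover have "inverse t \<le> 1" using t by (auto simp: inverse_le_1_iff)
      ultimately show "norm (F (inverse t) \<tau>) \<le> h 1 \<tau> + ln M" using F_bound[OF g] by simp
    qed
  qed
  have "((\<lambda>t. \<integral>\<tau>. F (inverse t) \<tau> \<partial>\<nu>) \<longlongrightarrow> (\<integral>\<tau>. - L \<tau> \<partial>\<nu>)) at_top"
    by (rule integral_dominated_convergence_at_top[OF fm sm int_w lim bnd])
  then have "((\<lambda>t. \<integral>\<tau>. F (inverse t) \<tau> \<partial>\<nu>) \<longlongrightarrow> - I) at_top" unfolding I_def by simp
  then show ?thesis by (simp add: filterlim_at_right_to_top)
qed

theorem main_lim: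
  "((\<lambda>q. ln (enn2real (\<integral>\<^sup>+\<tau>. G q \<tau> / ennreal (real n) \<partial>\<nu>)) / q)
     \<longlongrightarrow> - (1 / real n) * (\<integral>\<tau>. ln (prod_mset (\<Lambda> \<tau>)) \<partial>\<nu>)) (at_right 0)"
proof -
  have Ieq: "- (1 / real n) * (\<integral>\<tau>. ln (prod_mset (\<Lambda> \<tau>)) \<partial>\<nu>) = - I"
    unfolding I_def L_def by simp
  have ev1: "\<forall>\<^sub>F q in at_right 0. - I \<le> ln (enn2real (\<integral>\<^sup>+\<tau>. G q \<tau> / ennreal (real n) \<partial>\<nu>)) / q"
    using eventually_at_right_less[of 0] by (rule eventually_mono) (simp add: E_eq lower')
  have ev2: "\<forall>\<^sub>F q in at_right 0. ln (enn2real (\<integral>\<^sup>+\<tau>. G q \<tau> / ennreal (real n) \<partial>\<nu>)) / q \<le> (\<integral>\<tau>. F q \<tau> \<partial>\<nu>)"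
    using eventually_at_right_less[of 0] by (rule eventually_mono) (simp add: E_eq upper)
  show ?thesis unfolding Ieq
    by (rule tendsto_sandwich[OF ev1 ev2 tendsto_const int_F_lim])
qed

end


theorem lemma15:
  fixes \<nu> :: "'a::metric_space measure"
    and D :: "'a \<Rightarrow> nat \<Rightarrow> real mat"
    and m p :: nat
  assumes m: "m \<ge> 1" and p: "p \<ge> 1"
    and sigma_compact: "\<exists>K :: nat \<Rightarrow> 'a set. (\<forall>n. compact (K n)) \<and> (\<Union>n. K n) = UNIV"
    and prob: "prob_space \<nu>" and borel: "sets \<nu> = sets borel"
    and cont: "\<And>j a b. j < p \<Longrightarrow> a < m \<Longrightarrow> b < m \<Longrightarrow> continuous_on UNIV (\<lambda>\<tau>. D \<tau> j $$ (a, b))"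
    and psd: "\<And>\<tau>. TPSD m p (D \<tau>)"
    and bdd: "bdd_above (range (\<lambda>\<tau>. tnorm_op m p (D \<tau>)))"
    and integ: "\<And>q. q > 0 \<Longrightarrow> (\<integral>\<^sup>+ \<tau>. tnorm1_negpow m p (D \<tau>) q \<partial>\<nu>) < \<infinity>"
  shows "((\<lambda>q. ln (enn2real (\<integral>\<^sup>+ \<tau>. tnorm1_negpow m p (D \<tau>) q / ennreal (real (m * p)) \<partial>\<nu>)) / q)
           \<longlongrightarrow> - (1 / real (m * p)) * (\<integral> \<tau>. ln (Re (tdet m p (D \<tau>))) \<partial>\<nu>)) (at_right 0)"
proof -
  have ts: "\<And>\<tau>. tsym m p (D \<tau>)" and tens: "\<And>\<tau>. tensor m p (D \<tau>)"
    using psd unfolding TPSD_def by auto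
  obtain B where B: "\<And>\<tau>. tnorm_op m p (D \<tau>) \<le> B"
    using bdd unfolding bdd_above_def by auto
  define M where "M = max B 1"
  have M1: "1 \<le> M" unfolding M_def by simp
  have rng: "0 \<le> x \<and> x \<le> M" if "x \<in># lam m p (D \<tau>)" for \<tau> x
  proof
    show "0 \<le> x" by (rule TPSD_lam[OF ts psd that])
    have "x \<le> tnorm_op m p (D \<tau>)" by (rule le_tnorm_op[OF ts psd that])
    also have "\<dots> \<le> M" using B[of \<tau>] unfolding M_def by simp
    finally show "x \<le> M" .
  qed
  have ana: "ana \<nu> (\<lambda>\<tau>. lam m p (D \<tau>)) (m * p) M"
  proof (rule ana.intro)
    show "prob_space \<nu>" by (rule prob)
    show "1 \<le> m * p" using m p by simp
    show "\<And>\<tau>. size (lam m p (D \<tau>)) = m * p" by (rule size_lam[OF ts])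
    show "\<And>\<tau> x. x \<in># lam m p (D \<tau>) \<Longrightarrow> 0 \<le> x \<and> x \<le> M" by (rule rng)
    show "1 \<le> M" by (rule M1)
    show "\<And>f :: real \<Rightarrow> real. continuous_on {0..M} f \<Longrightarrow> (\<lambda>\<tau>. sum_mset (image_mset f (lam m p (D \<tau>)))) \<in> borel_measurable \<nu>"
      by (rule meas_S[OF borel cont ts rng]) auto
  qed
  interpret A0: ana \<nu> "\<lambda>\<tau>. lam m p (D \<tau>)" "m * p" M by (rule ana)
  have G_eq: "A0.G q \<tau> = tnorm1_negpow m p (D \<tau>) q" for q \<tau>
    unfolding A0.G_def using tnorm1_lam[OF ts tens] by simp
  interpret A: ana2 \<nu> "\<lambda>\<tau>. lam m p (D \<tau>)" "m * p" M
  proof (rule ana2.intro[OF ana], unfold_locales)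
    fix q :: real assume "q > 0"
    then show "(\<integral>\<^sup>+\<tau>. A0.G q \<tau> \<partial>\<nu>) < \<infinity>" unfolding G_eq by (rule integ)
  qed
  have "(\<integral>\<tau>. ln (Re (tdet m p (D \<tau>))) \<partial>\<nu>) = (\<integral>\<tau>. ln (prod_mset (lam m p (D \<tau>))) \<partial>\<nu>)"
    using tdet_lam[OF ts] by simp
  then show ?thesis using A.main_lim unfolding G_eq by simp
qed


end
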